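(* Let $s\in\mathbb{N}$, $0<\alpha\le1$, $p>\alpha^{-1}$ (with $p\le\infty$), and $q\in[1,\infty]$. For every point set $P=\{\mathbf{x}_0,\dots,\mathbf{x}_{N-1}\}\subset[0,1]^s$ we have $$e^{\mathrm{wor}}(Q_P,\mathcal{H}_{\alpha,s,p,q})=D^*_{\alpha,s,p',q'}(P),$$ where $Q_P(f)=\frac1N\sum_{n=0}^{N-1}f(\mathbf{x}_n)$ and $1/p+1/p'=1=1/q+1/q'$.
   Context: Let $S=\{1,\dots,s\}$. For $u\subseteq S$ write $\mathbf{t}_u=(t_j)_{j\in u}\in[0,1]^u$; $(x-t)_+^{\alpha-1}$ means $(x-t)^{\alpha-1}$ if $x>t$ and $0$ otherwise. Convention: $L_p([0,1]^\emptyset)=\mathbb{R}$ with absolute value as norm, and the integral over $[0,1]^\emptyset$ of $\tilde f_\emptyset$ is $\tilde f_\emptyset$. Space of fractional smoothness: $\mathcal{H}_{\alpha,s,p}$ is the set of functions $f:[0,1]^s\to\mathbb{R}$ of the form $f(\mathbf{x})=\sum_{u\subseteq S}\Gamma(\alpha)^{-|u|}\int_{[0,1]^u}\tilde f_u(\mathbf{t}_u)\prod_{j\in u}(x_j-t_j)_+^{\alpha-1}\,d\mathbf{t}_u$ with $\tilde f_u\in L_p([0,1]^u)$ for all $u\subseteq S$. The functions $\tilde f_u$ are uniquely determined (a.e.) by $f$, and $\mathcal{H}_{\alpha,s,p,q}$ denotes this space with the norm $\|f\|_{\alpha,s,p,q}=\big(\sum_{u\subseteq S}\Gamma(\alpha)^{-q|u|}\|\tilde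 f_u\|^q_{L_p}\big)^{1/q}$ (usual modification for $q=\infty$). Fractional discrepancy: for $\emptyset\ne u\subseteq S$ and $\mathbf{t}_u\in[0,1]^u$, $\Delta_\alpha(\mathbf{t}_u,u,P)=\alpha^{-|u|}\prod_{j\in u}(1-t_j)^\alpha-\frac1N\sum_{n=0}^{N-1}\prod_{j\in u}(x_{n,j}-t_j)_+^{\alpha-1}$, where $\mathbf{x}_n=(x_{n,1},\dots,x_{n,s})$, and $D^*_{\alpha,s,p',q'}(P)=\Big(\sum_{\emptyset\ne u\subseteq S}\big(\int_{[0,1]^u}|\Delta_\alpha(\mathbf{t}_u,u,P)|^{p'}d\mathbf{t}_u\big)^{q'/p'}\Big)^{1/q'}$ with the obvious modifications for $q'=\infty$. $e^{\mathrm{wor}}(Q_P,\mathcal{H}_{\alpha,s,p,q})=\sup\{|\int_{[0,1]^s}f-Q_P(f)|: f\in\mathcal{H}_{\alpha,s,p},\|f\|_{\alpha,s,p,q}\le1\}$. *)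

theory Defs
  imports "HOL-Analysis.Analysis" "HOL-Probability.Essential_Supremum"
begin

text \<open>Index set S = {1..s}; points of [0,1]^s are functions nat => real
  (only coordinates in S matter).\<close>

definition cube :: "nat \<Rightarrow> (nat \<Rightarrow> real) set" where
  "cube s = {x. \<forall>j\<in>{1..s}. x j \<in> {0..1}}"

text \<open>Lebesgue (Borel) measure on [0,1]^u, u a finite index set.
  For u = {} this is the one-point probability space, giving the stated conventions.\<close>
definition cube_measure :: "nat set \<Rightarrow> (nat \<Rightarrow> real) measure" where
  "cube_measure u = PiM u (\<lambda>_. restrict_space lborel {0..1::real})"

definition kern :: "real \<Rightarrow> real \<Rightarrow> real \<Rightarrow> real" where
  "kern \<alpha> x t = (if x > t then (x - t) powr (\<alpha> - 1) else 0)"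

definition enn_powr :: "ennreal \<Rightarrow> real \<Rightarrow> ennreal" where
  "enn_powr x r = (if x = \<infinity> then \<infinity> else ennreal (enn2real x powr r))"

definition conj_exp :: "ereal \<Rightarrow> ereal" where
  "conj_exp p = (if p = \<infinity> then 1 else if p = 1 then \<infinity>
                 else ereal (real_of_ereal p / (real_of_ereal p - 1)))"

definition Lp_norm :: "'a measure \<Rightarrow> ereal \<Rightarrow> ('a \<Rightarrow> real) \<Rightarrow> ennreal" where
  "Lp_norm M p g = (if p = \<infinity> then esssup M (\<lambda>x. ennreal \<bar>g x\<bar>)
     else enn_powr (\<integral>\<^sup>+ x. ennreal (\<bar>g x\<bar> powr real_of_ereal p) \<partial>M) (1 / real_of_ereal p))"

definition memLp :: "'a measure \<Rightarrow> ereal \<Rightarrow> ('a \<Rightarrow> real) \<Rightarrow> bool" where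
  "memLp M p g \<longleftrightarrow> g \<in> borel_measurable M \<and> Lp_norm M p g < \<infinity>"

definition represents ::
  "real \<Rightarrow> nat \<Rightarrow> ereal \<Rightarrow> (nat set \<Rightarrow> (nat \<Rightarrow> real) \<Rightarrow> real) \<Rightarrow> ((nat \<Rightarrow> real) \<Rightarrow> real) \<Rightarrow> bool" where
  "represents \<alpha> s p F f \<longleftrightarrow>
     (\<forall>u \<subseteq> {1..s}. memLp (cube_measure u) p (F u)) \<and>
     (\<forall>x \<in> cube s. f x = (\<Sum>u\<in>Pow {1..s}. Gamma \<alpha> powr (- real (card u)) *
        (\<integral> t. F u t * (\<Prod>j\<in>u. kern \<alpha> (x j) (t j)) \<partial>cube_measure u)))"

definition H_space :: "real \<Rightarrow> nat \<Rightarrow> ereal \<Rightarrow> ((nat \<Rightarrow> real) \<Rightarrow> real) set" where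
  "H_space \<alpha> s p = {f. \<exists>F. represents \<alpha> s p F f}"

definition rep_norm ::
  "real \<Rightarrow> nat \<Rightarrow> ereal \<Rightarrow> ereal \<Rightarrow> (nat set \<Rightarrow> (nat \<Rightarrow> real) \<Rightarrow> real) \<Rightarrow> ennreal" where
  "rep_norm \<alpha> s p q F =
     (let c = (\<lambda>u. ennreal (Gamma \<alpha> powr (- real (card u))) * Lp_norm (cube_measure u) p (F u))
      in if q = \<infinity> then Max (c ` Pow {1..s})
         else enn_powr (\<Sum>u\<in>Pow {1..s}. enn_powr (c u) (real_of_ereal q)) (1 / real_of_ereal q))"

text \<open>The norm of f in H_{alpha,s,p,q}; the representation is unique (a.e.), so
  this infimum is just the norm of the representation.\<close>
definition H_norm :: "real \<Rightarrow> nat \<Rightarrow> ereal \<Rightarrow> ereal \<Rightarrow> ((nat \<Rightarrow> real) \<Rightarrow> real) \<Rightarrow> ennreal" where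
  "H_norm \<alpha> s p q f = Inf {rep_norm \<alpha> s p q F | F. represents \<alpha> s p F f}"

definition QMC :: "nat \<Rightarrow> (nat \<Rightarrow> nat \<Rightarrow> real) \<Rightarrow> ((nat \<Rightarrow> real) \<Rightarrow> real) \<Rightarrow> real" where
  "QMC N x f = (1 / real N) * (\<Sum>n<N. f (x n))"

definition e_wor :: "real \<Rightarrow> nat \<Rightarrow> ereal \<Rightarrow> ereal \<Rightarrow> nat \<Rightarrow> (nat \<Rightarrow> nat \<Rightarrow> real) \<Rightarrow> ennreal" where
  "e_wor \<alpha> s p q N x = Sup {ennreal \<bar>(\<integral> y. f y \<partial>cube_measure {1..s}) - QMC N x f\<bar> | f.
       f \<in> H_space \<alpha> s p \<and> H_norm \<alpha> s p q f \<le> 1}"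

definition frac_disc_local :: "real \<Rightarrow> nat \<Rightarrow> (nat \<Rightarrow> nat \<Rightarrow> real) \<Rightarrow> nat set \<Rightarrow> (nat \<Rightarrow> real) \<Rightarrow> real" where
  "frac_disc_local \<alpha> N x u t = \<alpha> powr (- real (card u)) * (\<Prod>j\<in>u. (1 - t j) powr \<alpha>)
     - (1 / real N) * (\<Sum>n<N. \<Prod>j\<in>u. kern \<alpha> (x n j) (t j))"

definition frac_disc :: "real \<Rightarrow> nat \<Rightarrow> ereal \<Rightarrow> ereal \<Rightarrow> nat \<Rightarrow> (nat \<Rightarrow> nat \<Rightarrow> real) \<Rightarrow> ennreal" where
  "frac_disc \<alpha> s p' q' N x =
     (let c = (\<lambda>u. Lp_norm (cube_measure u) p' (frac_disc_local \<alpha> N x u))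
      in if q' = \<infinity> then Max (c ` (Pow {1..s} - {{}}))
         else enn_powr (\<Sum>u\<in>Pow {1..s} - {{}}. enn_powr (c u) (real_of_ereal q')) (1 / real_of_ereal q'))"

end

theory Submission
  imports Defs "HOL-Probability.Probability"
begin

lemma int_shift_right:
  fixes \<beta> y :: real
  assumes "-1 < \<beta>" "0 \<le> y"
  shows "((\<lambda>t. (y - t) powr \<beta>) has_integral y powr (\<beta>+1) / (\<beta>+1)) {0..y}"
proof -
  have h: "((\<lambda>z. z powr \<beta>) has_integral y powr (\<beta>+1) / (\<beta>+1)) (cbox 0 y)"
    using has_integral_powr_from_0[OF assms] by simp
  have "((\<lambda>x. (\<lambda>z. z powr \<beta>) ((-1) *\<^sub>R x + y)) has_integral (1 / (\<bar>-1\<bar> ^ DIM(real))) *\<^sub>R (y powr (\<beta>+1) / (\<beta>+1)))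
     ((\<lambda>x. (1 / (-1)) *\<^sub>R x + -((1 / (-1)) *\<^sub>R y)) ` cbox 0 y)"
    by (rule has_integral_affinity[OF h]) simp
  moreover have "((\<lambda>x. (1 / (-1)) *\<^sub>R x + -((1 / (-1)) *\<^sub>R y)) ` cbox 0 y) = {0..y}"
  proof -
    have "(\<lambda>x::real. (1 / (-1)) *\<^sub>R x + -((1 / (-1)) *\<^sub>R y)) = (\<lambda>x. y - x)" by auto
    moreover have "(\<lambda>x::real. y - x) ` {0..y} = {0..y}"
      by (auto simp: image_iff intro!: bexI[where x="y - _"])
    ultimately show ?thesis by simp
  qed
  ultimately show ?thesis by simp
qed

lemma int_shift_left:
  fixes \<beta> t :: real
  assumes "-1 < \<beta>" "t \<le> 1"
  shows "((\<lambda>x. (x - t) powr \<beta>) has_integral (1 - t) powr (\<beta>+1) / (\<beta>+1)) {t..1}"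
proof -
  have h: "((\<lambda>z. z powr \<beta>) has_integral (1-t) powr (\<beta>+1) / (\<beta>+1)) (cbox 0 (1-t))"
    using has_integral_powr_from_0[of \<beta> "1-t"] assms by simp
  have "((\<lambda>x. (\<lambda>z. z powr \<beta>) (1 *\<^sub>R x + (-t))) has_integral (1 / (\<bar>1\<bar> ^ DIM(real))) *\<^sub>R ((1-t) powr (\<beta>+1) / (\<beta>+1)))
     ((\<lambda>x. (1 / 1) *\<^sub>R x + -((1 / 1) *\<^sub>R (-t))) ` cbox 0 (1-t))"
    by (rule has_integral_affinity[OF h]) simp
  moreover have "((\<lambda>x. (1 / 1) *\<^sub>R x + -((1 / 1) *\<^sub>R (-t))) ` cbox 0 (1-t)) = {t..1}"
  proof -
    have "(\<lambda>x::real. (1 / 1) *\<^sub>R x + -((1 / 1) *\<^sub>R (-t))) = (\<lambda>x. x + t)" by auto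
    moreover have "(\<lambda>x::real. x + t) ` {0..1-t} = {t..1}"
      by (auto simp: image_iff intro!: bexI[where x="_ - t"])
    ultimately show ?thesis by simp
  qed
  ultimately show ?thesis by simp
qed

definition U01 :: "real measure" where "U01 = restrict_space lborel {0..1}"

lemma nn_U01: "f \<in> borel_measurable borel \<Longrightarrow> (\<integral>\<^sup>+x. f x \<partial>U01) = (\<integral>\<^sup>+x. f x * indicator {0..1} x \<partial>lborel)"
  unfolding U01_def by (subst nn_integral_restrict_space) (auto simp: nn_integral_set_ennreal mult.commute intro!: nn_integral_cong split: split_indicator)

lemma kern_int_t:
  fixes \<beta> y :: real
  assumes "-1 < \<beta>" "0 \<le> y" "y \<le> 1"
  shows "(\<integral>\<^sup>+t. ennreal (if t < y then (y - t) powr \<beta> else 0) \<partial>U01) = ennreal (y powr (\<beta>+1) / (\<beta>+1))"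
proof -
  have "(\<integral>\<^sup>+t. ennreal (if t < y then (y - t) powr \<beta> else 0) \<partial>U01)
     = (\<integral>\<^sup>+t. ennreal (if t < y then (y - t) powr \<beta> else 0) * indicator {0..1} t \<partial>lborel)"
    by (rule nn_U01) measurable
  also have "\<dots> = (\<integral>\<^sup>+t. ennreal (indicator {0..y} t * (y - t) powr \<beta>) \<partial>lborel)"
    using assms by (intro nn_integral_cong) (auto split: split_indicator)
  also have "\<dots> = ennreal (y powr (\<beta>+1) / (\<beta>+1))"
    by (rule nn_integral_has_integral_lebesgue[OF _ int_shift_right[OF assms(1,2)]]) simp
  finally show ?thesis .
qed

lemma kern_int_x:
  fixes \<beta> t :: real
  assumes "-1 < \<beta>" "0 \<le> t" "t \<le> 1"
  shows "(\<integral>\<^sup>+x. ennreal (if t < x then (x - t) powr \<beta> else 0) \<partial>U01) = ennreal ((1-t) powr (\<beta>+1) / (\<beta>+1))"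
proof -
  have "(\<integral>\<^sup>+x. ennreal (if t < x then (x - t) powr \<beta> else 0) \<partial>U01)
     = (\<integral>\<^sup>+x. ennreal (if t < x then (x - t) powr \<beta> else 0) * indicator {0..1} x \<partial>lborel)"
    by (rule nn_U01) measurable
  also have "\<dots> = (\<integral>\<^sup>+x. ennreal (indicator {t..1} x * (x - t) powr \<beta>) \<partial>lborel)"
    using assms by (intro nn_integral_cong) (auto split: split_indicator)
  also have "\<dots> = ennreal ((1-t) powr (\<beta>+1) / (\<beta>+1))"
    by (rule nn_integral_has_integral_lebesgue[OF _ int_shift_left[OF assms(1,3)]]) simp
  finally show ?thesis .
qed

definition cpair :: "ereal \<Rightarrow> ereal \<Rightarrow> bool" where
  "cpair p p' \<longleftrightarrow> (p = \<infinity> \<and> p' = 1) \<or> (p = 1 \<and> p' = \<infinity>) \<or> (\<exists>r. p = ereal r \<and> 1 < r \<and> p' = ereal (r/(r-1)))"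

lemma cpair_conj: "1 \<le> p \<Longrightarrow> cpair p (conj_exp p)"
  unfolding cpair_def conj_exp_def
  by (cases p) auto

lemma cpair_sym: "cpair p p' \<Longrightarrow> cpair p' p"
  unfolding cpair_def
proof (elim disjE exE conjE)
  fix r assume *: "p = ereal r" "1 < r" "p' = ereal (r / (r - 1))"
  have "1 < r/(r-1)" using *(2) by (simp add: field_simps)
  moreover have "r/(r-1) / (r/(r-1) - 1) = r" using *(2) by (simp add: field_simps)
  ultimately show "p' = \<infinity> \<and> p = 1 \<or> p' = 1 \<and> p = \<infinity> \<or> (\<exists>r. p' = ereal r \<and> 1 < r \<and> p = ereal (r / (r - 1)))"
    using * by (intro disjI2) (auto intro!: exI[of _ "r/(r-1)"])
qed auto

lemma enn_powr_ennreal: "0 \<le> x \<Longrightarrow> enn_powr (ennreal x) r = ennreal (x powr r)"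
  by (simp add: enn_powr_def)

lemma enn_powr_one: "enn_powr X 1 = X"
  by (cases X) (auto simp: enn_powr_def)

lemma enn_powr_zero_iff: "enn_powr X r = 0 \<longleftrightarrow> X = 0"
  by (cases X) (auto simp: enn_powr_def ennreal_eq_0_iff)

lemma enn_powr_top_iff: "enn_powr X r = \<infinity> \<longleftrightarrow> X = \<infinity>"
  by (cases X) (auto simp: enn_powr_def)

lemma Lp_norm_fin: "Lp_norm M (ereal r) g = enn_powr (\<integral>\<^sup>+ x. ennreal (\<bar>g x\<bar> powr r) \<partial>M) (1 / r)"
  by (simp add: Lp_norm_def)

lemma Lp_norm_one: "Lp_norm M 1 g = (\<integral>\<^sup>+ x. ennreal \<bar>g x\<bar> \<partial>M)"
  using Lp_norm_fin[of M 1 g] by (simp add: enn_powr_one one_ereal_def)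

lemma Lp_norm_inf: "Lp_norm M \<infinity> g = esssup M (\<lambda>x. ennreal \<bar>g x\<bar>)"
  by (simp add: Lp_norm_def)

lemma holder_inf:
  assumes [measurable]: "f \<in> borel_measurable M" "g \<in> borel_measurable M"
  shows "(\<integral>\<^sup>+x. ennreal \<bar>f x * g x\<bar> \<partial>M) \<le> Lp_norm M \<infinity> f * Lp_norm M 1 g"
proof -
  have "(\<integral>\<^sup>+x. ennreal \<bar>f x * g x\<bar> \<partial>M) = (\<integral>\<^sup>+x. ennreal \<bar>f x\<bar> * ennreal \<bar>g x\<bar> \<partial>M)"
    by (simp add: abs_mult ennreal_mult)
  also have "\<dots> \<le> (\<integral>\<^sup>+x. esssup M (\<lambda>x. ennreal \<bar>f x\<bar>) * ennreal \<bar>g x\<bar> \<partial>M)"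
    using esssup_AE[of "\<lambda>x. ennreal \<bar>f x\<bar>" M]
    by (intro nn_integral_mono_AE) (auto elim!: eventually_mono intro: mult_right_mono)
  also have "\<dots> = esssup M (\<lambda>x. ennreal \<bar>f x\<bar>) * (\<integral>\<^sup>+x. ennreal \<bar>g x\<bar> \<partial>M)"
    by (rule nn_integral_cmult) measurable
  finally show ?thesis by (simp add: Lp_norm_one Lp_norm_inf)
qed

lemma zero_AE_of_nn:
  assumes [measurable]: "f \<in> borel_measurable M" and "0 < r"
    and "(\<integral>\<^sup>+ x. ennreal (\<bar>f x\<bar> powr r) \<partial>M) = 0"
  shows "AE x in M. f x = 0"
proof -
  have "AE x in M. ennreal (\<bar>f x\<bar> powr r) = 0"
    using assms(3) by (subst (asm) nn_integral_0_iff_AE) auto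
  then show ?thesis by eventually_elim (auto simp: ennreal_eq_0_iff)
qed

lemma holder_fin:
  assumes [measurable]: "f \<in> borel_measurable M" "g \<in> borel_measurable M"
    and r: "1 < r" and r': "r' = r/(r-1)"
  shows "(\<integral>\<^sup>+x. ennreal \<bar>f x * g x\<bar> \<partial>M) \<le> Lp_norm M (ereal r) f * Lp_norm M (ereal r') g"
proof -
  have "1 < r/(r-1)" using r by (simp add: field_simps)
  then have r'1: "1 < r'" using r' by simp
  have rr: "1/r + 1/r' = 1" using r r'1 unfolding r' by (simp add: field_simps)
  define A where "A = (\<integral>\<^sup>+ x. ennreal (\<bar>f x\<bar> powr r) \<partial>M)"
  define B where "B = (\<integral>\<^sup>+ x. ennreal (\<bar>g x\<bar> powr r') \<partial>M)"
  have LA: "Lp_norm M (ereal r) f = enn_powr A (1/r)" unfolding A_def Lp_norm_fin ..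
  have LB: "Lp_norm M (ereal r') g = enn_powr B (1/r')" unfolding B_def Lp_norm_fin ..
  show ?thesis
  proof (cases "A = 0 \<or> B = 0")
    case True
    then have "AE x in M. f x * g x = 0"
    proof
      assume "A = 0"
      then have "AE x in M. f x = 0" using zero_AE_of_nn[of f M r] r unfolding A_def by auto
      then show ?thesis by eventually_elim auto
    next
      assume "B = 0"
      then have "AE x in M. g x = 0" using zero_AE_of_nn[of g M r'] r'1 unfolding B_def by auto
      then show ?thesis by eventually_elim auto
    qed
    then have "(\<integral>\<^sup>+x. ennreal \<bar>f x * g x\<bar> \<partial>M) = 0"
      by (subst nn_integral_0_iff_AE) (auto elim!: eventually_mono)
    then show ?thesis by simp
  next
    case False
    note nz = False
    show ?thesis
    proof (cases "A = \<infinity> \<or> B = \<infinity>")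
      case True
      then have "Lp_norm M (ereal r) f * Lp_norm M (ereal r') g = \<infinity>"
        using nz unfolding LA LB
        by (auto simp: enn_powr_top_iff enn_powr_zero_iff ennreal_mult_eq_top_iff enn_powr_def enn2real_eq_0_iff)
      then show ?thesis by simp
    next
      case False
      obtain A' where A': "A = ennreal A'" "0 < A'" using False nz
        by (cases A) (auto simp: ennreal_eq_0_iff)
      obtain B' where B': "B = ennreal B'" "0 < B'" using False nz
        by (cases B) (auto simp: ennreal_eq_0_iff)
      define a where "a = A' powr (1/r)"
      define b where "b = B' powr (1/r')"
      have a: "0 < a" "a powr r = A'" using A' r by (auto simp: a_def powr_powr)
      have b: "0 < b" "b powr r' = B'" using B' r'1 by (auto simp: b_def powr_powr)
      have pt: "\<bar>f x * g x\<bar> \<le> a * b / (r * A') * \<bar>f x\<bar> powr r + a * b / (r' * B') * \<bar>g x\<bar> powr r'" for x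
      proof -
        have "(\<bar>f x\<bar>/a) * (\<bar>g x\<bar>/b) \<le> (\<bar>f x\<bar>/a) powr r / r + (\<bar>g x\<bar>/b) powr r' / r'"
          by (rule Youngs_inequality) (use r r'1 rr a b in auto)
        also have "\<dots> = \<bar>f x\<bar> powr r / (r * A') + \<bar>g x\<bar> powr r' / (r' * B')"
          using a b by (simp add: powr_divide mult.commute)
        finally have "\<bar>f x\<bar> * \<bar>g x\<bar> \<le> a * b * (\<bar>f x\<bar> powr r / (r * A') + \<bar>g x\<bar> powr r' / (r' * B'))"
          using a b by (simp add: field_simps)
        then show ?thesis by (simp add: abs_mult algebra_simps)
      qed
      have "(\<integral>\<^sup>+x. ennreal \<bar>f x * g x\<bar> \<partial>M) \<le>
          (\<integral>\<^sup>+x. ennreal (a * b / (r * A')) * ennreal (\<bar>f x\<bar> powr r) + ennreal (a * b / (r' * B')) * ennreal (\<bar>g x\<bar> powr r') \<partial>M)"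
      proof (intro nn_integral_mono)
        fix x
        have c1: "0 \<le> a * b / (r * A')" and c2: "0 \<le> a * b / (r' * B')"
          using a b A' B' r r'1 by auto
        have "ennreal \<bar>f x * g x\<bar> \<le> ennreal (a * b / (r * A') * \<bar>f x\<bar> powr r + a * b / (r' * B') * \<bar>g x\<bar> powr r')"
          by (rule ennreal_leI[OF pt])
        also have "\<dots> = ennreal (a * b / (r * A')) * ennreal (\<bar>f x\<bar> powr r) + ennreal (a * b / (r' * B')) * ennreal (\<bar>g x\<bar> powr r')"
          using c1 c2 by (simp del: times_divide_eq_left add: ennreal_plus ennreal_mult)
        finally show "ennreal \<bar>f x * g x\<bar> \<le> \<dots>" .
      qed
      also have "\<dots> = ennreal (a * b / (r * A')) * A + ennreal (a * b / (r' * B')) * B"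
        unfolding A_def B_def by (subst nn_integral_add) (auto simp: nn_integral_cmult)
      also have "\<dots> = ennreal (a * b)"
        using a b A' B' r r'1 rr by (simp flip: ennreal_mult ennreal_plus add: field_simps)
      also have "\<dots> = Lp_norm M (ereal r) f * Lp_norm M (ereal r') g"
        unfolding LA LB A' B' using A' B' a b by (simp add: enn_powr_ennreal a_def b_def ennreal_mult)
      finally show ?thesis .
    qed
  qed
qed

lemma holder:
  assumes "cpair p p'" "f \<in> borel_measurable M" "g \<in> borel_measurable M"
  shows "(\<integral>\<^sup>+x. ennreal \<bar>f x * g x\<bar> \<partial>M) \<le> Lp_norm M p f * Lp_norm M p' g"
  using assms(1) unfolding cpair_def
proof (elim disjE exE conjE)
  assume "p = \<infinity>" "p' = 1" then show ?thesis using holder_inf[OF assms(2,3)] by simp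
next
  assume "p = 1" "p' = \<infinity>" then show ?thesis using holder_inf[OF assms(3,2)]
    by (simp add: mult.commute)
next
  fix r assume "p = ereal r" "1 < r" "p' = ereal (r / (r - 1))"
  then show ?thesis using holder_fin[OF assms(2,3)] by simp
qed

lemma attain_inf:
  assumes g[measurable]: "g \<in> borel_measurable M" and fin: "Lp_norm M 1 g < \<infinity>"
  shows "\<exists>f. f \<in> borel_measurable M \<and> Lp_norm M \<infinity> f \<le> 1 \<and> integrable M (\<lambda>x. f x * g x)
     \<and> (\<integral>x. f x * g x \<partial>M) = enn2real (Lp_norm M 1 g)"
proof (intro exI conjI)
  show "(\<lambda>x. sgn (g x)) \<in> borel_measurable M" by measurable
  show "Lp_norm M \<infinity> (\<lambda>x. sgn (g x)) \<le> 1"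
    unfolding Lp_norm_inf by (rule esssup_I) (auto simp: sgn_real_def)
  have eq: "(\<lambda>x. sgn (g x) * g x) = (\<lambda>x. \<bar>g x\<bar>)" by (auto simp: sgn_real_def)
  show "integrable M (\<lambda>x. sgn (g x) * g x)"
    unfolding eq using fin by (intro integrableI_bounded) (auto simp: Lp_norm_one)
  show "(\<integral>x. sgn (g x) * g x \<partial>M) = enn2real (Lp_norm M 1 g)"
    unfolding eq Lp_norm_one by (rule integral_eq_nn_integral) auto
qed

lemma attain_fin:
  assumes g[measurable]: "g \<in> borel_measurable M" and r: "1 < r" and r': "r' = r/(r-1)"
    and fin: "Lp_norm M (ereal r') g < \<infinity>"
  shows "\<exists>f. f \<in> borel_measurable M \<and> Lp_norm M (ereal r) f \<le> 1 \<and> integrable M (\<lambda>x. f x * g x)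
     \<and> (\<integral>x. f x * g x \<partial>M) = enn2real (Lp_norm M (ereal r') g)"
proof -
  have "1 < r/(r-1)" using r by (simp add: field_simps)
  then have r'1: "1 < r'" using r' by simp
  have rr: "(r' - 1) * r = r'" using r unfolding r' by (simp add: field_simps)
  define B where "B = (\<integral>\<^sup>+ x. ennreal (\<bar>g x\<bar> powr r') \<partial>M)"
  have LB: "Lp_norm M (ereal r') g = enn_powr B (1/r')" unfolding B_def Lp_norm_fin ..
  have Bfin: "B < \<infinity>" using fin unfolding LB by (cases "B = \<infinity>") (auto simp: enn_powr_def top.not_eq_extremum)
  show ?thesis
  proof (cases "B = 0")
    case True
    show ?thesis
    proof (intro exI conjI)
      show "(\<lambda>x. 0::real) \<in> borel_measurable M" by simp
      show "Lp_norm M (ereal r) (\<lambda>x. 0) \<le> 1" using r by (simp add: Lp_norm_fin enn_powr_def)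
      show "integrable M (\<lambda>x. 0 * g x)" by simp
      show "(\<integral>x. 0 * g x \<partial>M) = enn2real (Lp_norm M (ereal r') g)"
        unfolding LB True by (simp add: enn_powr_def)
    qed
  next
    case False
    obtain B' where B': "B = ennreal B'" "0 < B'" using False Bfin
      by (cases B) (auto simp: ennreal_eq_0_iff)
    define b where "b = B' powr (1/r')"
    have b: "0 < b" "b powr r' = B'" using B' r'1 by (auto simp: b_def powr_powr)
    define f where "f x = sgn (g x) * \<bar>g x\<bar> powr (r' - 1) / b powr (r' - 1)" for x
    have f[measurable]: "f \<in> borel_measurable M" unfolding f_def by measurable
    have fr: "\<bar>f x\<bar> powr r = \<bar>g x\<bar> powr r' / B'" for x
    proof -
      have "\<bar>f x\<bar> = \<bar>g x\<bar> powr (r' - 1) / b powr (r' - 1)"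
        unfolding f_def using b by (auto simp: sgn_real_def abs_mult)
      then have "\<bar>f x\<bar> powr r = (\<bar>g x\<bar> powr (r' - 1)) powr r / (b powr (r' - 1)) powr r"
        by (simp add: powr_divide)
      also have "\<dots> = \<bar>g x\<bar> powr r' / b powr r'" by (simp add: powr_powr rr)
      finally show ?thesis using b by simp
    qed
    have fg: "f x * g x = \<bar>g x\<bar> powr r' / b powr (r' - 1)" for x
    proof (cases "g x = 0")
      case True then show ?thesis by (simp add: f_def)
    next
      case False
      have "sgn (g x) * g x = \<bar>g x\<bar>" by (auto simp: sgn_real_def)
      moreover have "\<bar>g x\<bar> powr (r' - 1) * \<bar>g x\<bar> = \<bar>g x\<bar> powr r'"
        using False by (simp add: mult.commute powr_mult_base)
      ultimately show ?thesis unfolding f_def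
        by (metis (no_types, lifting) mult.commute mult.left_commute times_divide_eq_left)
    qed
    show ?thesis
    proof (intro exI conjI)
      show "f \<in> borel_measurable M" by simp
      have "(\<integral>\<^sup>+ x. ennreal (\<bar>f x\<bar> powr r) \<partial>M) = (\<integral>\<^sup>+ x. ennreal (1/B') * ennreal (\<bar>g x\<bar> powr r') \<partial>M)"
        unfolding fr using B' by (intro nn_integral_cong) (simp add: ennreal_mult[symmetric])
      also have "\<dots> = ennreal (1/B') * B" unfolding B_def by (rule nn_integral_cmult) measurable
      also have "\<dots> = 1" using B' by (simp flip: ennreal_mult)
      finally show "Lp_norm M (ereal r) f \<le> 1" by (simp add: Lp_norm_fin enn_powr_def)
      have nnfg: "(\<integral>\<^sup>+ x. ennreal (f x * g x) \<partial>M) = ennreal (1 / b powr (r' - 1)) * B"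
        unfolding fg B_def using b
        by (subst nn_integral_cmult[symmetric]) (auto intro!: nn_integral_cong simp flip: ennreal_mult)
      have nn0: "0 \<le> f x * g x" for x unfolding fg using b by simp
      show "integrable M (\<lambda>x. f x * g x)"
        using nnfg nn0 B' by (intro integrableI_nonneg) (auto simp flip: ennreal_mult)
      have "(\<integral>x. f x * g x \<partial>M) = enn2real (ennreal (1 / b powr (r' - 1)) * B)"
        using nn0 nnfg by (subst integral_eq_nn_integral) auto
      also have "\<dots> = B' / b powr (r' - 1)" using B' b by (simp flip: ennreal_mult)
      also have "\<dots> = b" using b by (simp flip: b(2) add: powr_diff)
      also have "\<dots> = enn2real (Lp_norm M (ereal r') g)" unfolding LB B' using B' by (simp add: enn_powr_def b_def)
      finally show "(\<integral>x. f x * g x \<partial>M) = enn2real (Lp_norm M (ereal r') g)" .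
    qed
  qed
qed

lemma attain:
  assumes "cpair p p'" "p \<noteq> 1" "g \<in> borel_measurable M" "Lp_norm M p' g < \<infinity>"
  shows "\<exists>f. f \<in> borel_measurable M \<and> Lp_norm M p f \<le> 1 \<and> integrable M (\<lambda>x. f x * g x)
     \<and> (\<integral>x. f x * g x \<partial>M) = enn2real (Lp_norm M p' g)"
  using assms(1,2) unfolding cpair_def
proof (elim disjE exE conjE)
  assume "p = \<infinity>" "p' = 1" then show ?thesis using attain_inf[OF assms(3)] assms(4) by simp
next
  fix r assume "p = ereal r" "1 < r" "p' = ereal (r / (r - 1))"
  then show ?thesis using attain_fin[OF assms(3), of r] assms(4) by simp
qed simp

lemma enn_powr_mono: "X \<le> Y \<Longrightarrow> 0 \<le> e \<Longrightarrow> enn_powr X e \<le> enn_powr Y e"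
  by (cases X; cases Y) (auto simp: enn_powr_def top_unique intro!: ennreal_leI powr_mono2)

lemma enn_powr_less_top: "enn_powr X e < \<infinity> \<longleftrightarrow> X < \<infinity>"
  by (cases "X = \<infinity>") (auto simp: enn_powr_def top.not_eq_extremum)

lemma Lp_fin_iff: "0 < r \<Longrightarrow> Lp_norm M (ereal r) g < \<infinity> \<longleftrightarrow> (\<integral>\<^sup>+x. ennreal (\<bar>g x\<bar> powr r) \<partial>M) < \<infinity>"
  unfolding Lp_norm_fin enn_powr_less_top ..

lemma Lp_mono:
  assumes "\<And>x. x \<in> space M \<Longrightarrow> \<bar>f x\<bar> \<le> \<bar>g x\<bar>" "f \<in> borel_measurable M" "p = \<infinity> \<or> (\<exists>r. p = ereal r \<and> 0 < r)"
  shows "Lp_norm M p f \<le> Lp_norm M p g"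
  using assms(3)
proof (elim disjE exE conjE)
  assume p: "p = \<infinity>" show ?thesis unfolding p Lp_norm_inf
    using assms(1,2) by (intro esssup_AE_mono) (auto intro!: AE_I2 ennreal_leI)
next
  fix r assume r: "p = ereal r" "0 < r"
  show ?thesis unfolding r Lp_norm_fin using r
    by (intro enn_powr_mono nn_integral_mono ennreal_leI powr_mono2) (auto intro!: assms(1))
qed

lemma Lp_cmult_le:
  assumes "p = \<infinity> \<or> (\<exists>r. p = ereal r \<and> 0 < r)" "g \<in> borel_measurable M"
  shows "Lp_norm M p (\<lambda>x. c * g x) \<le> ennreal \<bar>c\<bar> * Lp_norm M p g"
  using assms(1)
proof (elim disjE exE conjE)
  assume p: "p = \<infinity>" show ?thesis unfolding p Lp_norm_inf
    using esssup_AE[of "\<lambda>x. ennreal \<bar>g x\<bar>" M] assms(2)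
    by (intro esssup_I) (auto elim!: eventually_mono simp: abs_mult ennreal_mult intro!: mult_left_mono)
next
  fix r assume r: "p = ereal r" "0 < r"
  define X where "X = (\<integral>\<^sup>+x. ennreal (\<bar>g x\<bar> powr r) \<partial>M)"
  have "(\<integral>\<^sup>+x. ennreal (\<bar>c * g x\<bar> powr r) \<partial>M) = (\<integral>\<^sup>+x. ennreal (\<bar>c\<bar> powr r) * ennreal (\<bar>g x\<bar> powr r) \<partial>M)"
    by (simp add: abs_mult powr_mult ennreal_mult)
  also have "\<dots> = ennreal (\<bar>c\<bar> powr r) * X" unfolding X_def using assms(2) by (intro nn_integral_cmult) measurable
  finally have eq: "(\<integral>\<^sup>+x. ennreal (\<bar>c * g x\<bar> powr r) \<partial>M) = ennreal (\<bar>c\<bar> powr r) * X" .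
  show ?thesis
  proof (cases "X = \<infinity>")
    case True
    then show ?thesis unfolding r Lp_norm_fin eq[unfolded X_def] X_def[symmetric] 
      by (cases "c = 0") (auto simp: enn_powr_def ennreal_mult_top)
  next
    case False
    then obtain x where x: "X = ennreal x" "0 \<le> x" by (cases X) auto
    show ?thesis unfolding r Lp_norm_fin eq[unfolded X_def] X_def[symmetric] x using r x
      by (simp add: enn_powr_def ennreal_mult[symmetric] powr_mult powr_powr)
  qed
qed

lemma Lp_cmult_fin:
  assumes "p = \<infinity> \<or> (\<exists>r. p = ereal r \<and> 0 < r)" "g \<in> borel_measurable M" "Lp_norm M p g < \<infinity>"
  shows "Lp_norm M p (\<lambda>x. c * g x) < \<infinity>"
proof -
  have "ennreal \<bar>c\<bar> * Lp_norm M p g < \<infinity>" using assms(3) by (simp add: ennreal_mult_less_top)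
  then show ?thesis by (rule le_less_trans[OF Lp_cmult_le[OF assms(1,2)]])
qed

lemma powr_add_le:
  fixes a b r :: real
  assumes "0 \<le> r"
  shows "\<bar>a + b\<bar> powr r \<le> 2 powr r * (\<bar>a\<bar> powr r + \<bar>b\<bar> powr r)"
proof -
  have "\<bar>a + b\<bar> powr r \<le> (2 * max \<bar>a\<bar> \<bar>b\<bar>) powr r"
    using assms by (intro powr_mono2) auto
  also have "\<dots> = 2 powr r * max \<bar>a\<bar> \<bar>b\<bar> powr r" by (simp add: powr_mult)
  also have "\<dots> \<le> 2 powr r * (\<bar>a\<bar> powr r + \<bar>b\<bar> powr r)"
  proof (intro mult_left_mono)
    show "max \<bar>a\<bar> \<bar>b\<bar> powr r \<le> \<bar>a\<bar> powr r + \<bar>b\<bar> powr r"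
      by (cases "\<bar>a\<bar> \<le> \<bar>b\<bar>") (auto simp: max_def)
  qed simp
  finally show ?thesis .
qed

lemma Lp_add_fin:
  assumes r: "0 < r" and [measurable]: "f \<in> borel_measurable M" "g \<in> borel_measurable M"
    and "Lp_norm M (ereal r) f < \<infinity>" "Lp_norm M (ereal r) g < \<infinity>"
  shows "Lp_norm M (ereal r) (\<lambda>x. f x + g x) < \<infinity>"
proof -
  have "(\<integral>\<^sup>+x. ennreal (\<bar>f x + g x\<bar> powr r) \<partial>M) \<le>
      (\<integral>\<^sup>+x. ennreal (2 powr r) * ennreal (\<bar>f x\<bar> powr r) + ennreal (2 powr r) * ennreal (\<bar>g x\<bar> powr r) \<partial>M)"
    using r by (intro nn_integral_mono) (auto simp flip: ennreal_mult ennreal_plus simp: distrib_left[symmetric] intro!: ennreal_leI powr_add_le)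
  also have "\<dots> = ennreal (2 powr r) * (\<integral>\<^sup>+x. ennreal (\<bar>f x\<bar> powr r) \<partial>M) + ennreal (2 powr r) * (\<integral>\<^sup>+x. ennreal (\<bar>g x\<bar> powr r) \<partial>M)"
    by (simp add: nn_integral_add nn_integral_cmult)
  also have "\<dots> < \<infinity>" using assms(4,5) r Lp_fin_iff[OF r, of M f] Lp_fin_iff[OF r, of M g] by (simp add: ennreal_mult_less_top)
  finally show ?thesis using Lp_fin_iff[OF r, of M "\<lambda>x. f x + g x"] by simp
qed

lemma Lp_sum_fin:
  assumes r: "0 < r" and I: "finite I" and [measurable]: "\<And>i. i \<in> I \<Longrightarrow> f i \<in> borel_measurable M"
    and fin: "\<And>i. i \<in> I \<Longrightarrow> Lp_norm M (ereal r) (f i) < \<infinity>"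
  shows "Lp_norm M (ereal r) (\<lambda>x. \<Sum>i\<in>I. f i x) < \<infinity>"
  using I assms(3,4)
proof (induction I rule: finite_induct)
  case empty then show ?case using r by (simp add: Lp_norm_fin enn_powr_def)
next
  case (insert i I)
  have m: "(\<lambda>x. \<Sum>i\<in>I. f i x) \<in> borel_measurable M" using insert.prems by (intro borel_measurable_sum) auto
  show ?case unfolding sum.insert[OF insert.hyps]
    by (rule Lp_add_fin[OF r]) (use insert m in auto)
qed

lemma Lp_bounded:
  assumes "finite_measure M" "0 < r" "g \<in> borel_measurable M" "\<And>x. x \<in> space M \<Longrightarrow> \<bar>g x\<bar> \<le> C"
  shows "Lp_norm M (ereal r) g < \<infinity>"
proof -
  interpret finite_measure M by fact
  have "(\<integral>\<^sup>+x. ennreal (\<bar>g x\<bar> powr r) \<partial>M) \<le> (\<integral>\<^sup>+x. ennreal (\<bar>C\<bar> powr r) \<partial>M)"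
    using assms(2,4) by (intro nn_integral_mono ennreal_leI powr_mono2) (auto intro: order_trans[OF _ abs_ge_self])
  also have "\<dots> < \<infinity>" using emeasure_finite[of "space M"] by (simp add: ennreal_mult_eq_top_iff less_top[symmetric])
  finally show ?thesis using Lp_fin_iff[OF assms(2), of M g] by simp
qed

lemma holder_integrable:
  assumes "cpair p p'" "f \<in> borel_measurable M" "g \<in> borel_measurable M" "Lp_norm M p f < \<infinity>" "Lp_norm M p' g < \<infinity>"
  shows "integrable M (\<lambda>x. f x * g x)" "ennreal \<bar>\<integral>x. f x * g x \<partial>M\<bar> \<le> Lp_norm M p f * Lp_norm M p' g"
proof -
  have h: "(\<integral>\<^sup>+x. ennreal \<bar>f x * g x\<bar> \<partial>M) \<le> Lp_norm M p f * Lp_norm M p' g" by (rule holder[OF assms(1-3)])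
  also have "\<dots> < \<infinity>" using assms(4,5) by (simp add: ennreal_mult_less_top)
  finally show i: "integrable M (\<lambda>x. f x * g x)" using assms(2,3) by (intro integrableI_bounded) auto
  have "ennreal \<bar>\<integral>x. f x * g x \<partial>M\<bar> \<le> (\<integral>\<^sup>+x. ennreal \<bar>f x * g x\<bar> \<partial>M)"
    using integral_norm_bound_ennreal[OF i] by simp
  with h show "ennreal \<bar>\<integral>x. f x * g x \<partial>M\<bar> \<le> Lp_norm M p f * Lp_norm M p' g" by simp
qed

lemma U01_prob: "prob_space U01"
  unfolding U01_def by (intro prob_spaceI) (simp add: space_restrict_space emeasure_restrict_space)

lemma space_U01: "space U01 = {0..1}"
  unfolding U01_def by (simp add: space_restrict_space)

lemma psf: "product_sigma_finite (\<lambda>_::nat. U01)"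
  unfolding product_sigma_finite_def
  using U01_prob prob_space_imp_sigma_finite by blast

lemma ppsU: "product_prob_space (\<lambda>_::nat. U01)"
  unfolding product_prob_space_def product_prob_space_axioms_def
  using psf U01_prob by blast

lemma cm: "cube_measure u = PiM u (\<lambda>_. U01)"
  unfolding cube_measure_def U01_def ..

lemma cm_prob: "prob_space (cube_measure u)"
  unfolding cm by (rule prob_space_PiM) (rule U01_prob)

lemma cm_sf: "sigma_finite_measure (cube_measure u)"
  using cm_prob prob_space_imp_sigma_finite by blast

lemma cm_pair: "pair_sigma_finite (cube_measure A) (cube_measure B)"
  unfolding pair_sigma_finite_def using cm_sf by blast

lemma space_cm: "space (cube_measure u) = PiE u (\<lambda>_. {0..1})"
  unfolding cm by (simp add: space_PiM space_U01)

lemma U01_meas: "f \<in> borel_measurable borel \<Longrightarrow> f \<in> borel_measurable U01"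
  unfolding U01_def by (intro measurable_restrict_space1) simp

lemma comp_meas: "j \<in> u \<Longrightarrow> (\<lambda>t. t j) \<in> borel_measurable (cube_measure u)"
proof -
  assume "j \<in> u"
  then have "(\<lambda>t. t j) \<in> measurable (cube_measure u) U01"
    unfolding cm by (rule measurable_component_singleton)
  moreover have "(\<lambda>x::real. x) \<in> borel_measurable U01"
    unfolding U01_def by (intro measurable_restrict_space1) simp
  ultimately show ?thesis by (rule measurable_compose)
qed

lemma kern_meas[measurable]:
  assumes [measurable]: "f \<in> borel_measurable M" "g \<in> borel_measurable M"
  shows "(\<lambda>x. kern \<alpha> (f x) (g x)) \<in> borel_measurable M"
  unfolding kern_def by measurable

lemma K_meas:
  assumes "u \<subseteq> v" "\<And>j. j \<in> u \<Longrightarrow> (\<lambda>z. a z j) \<in> borel_measurable M" "\<And>j. j \<in> u \<Longrightarrow> (\<lambda>z. b z j) \<in> borel_measurable M"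
  shows "(\<lambda>z. \<Prod>j\<in>u. kern \<alpha> (a z j) (b z j)) \<in> borel_measurable M"
  using assms by (intro borel_measurable_prod kern_meas) auto

lemma kern_nonneg: "0 \<le> kern \<alpha> x t"
  unfolding kern_def by auto

lemma kern_powr: "0 < r \<Longrightarrow> kern \<alpha> x t powr r = (if t < x then (x - t) powr ((\<alpha> - 1) * r) else 0)"
  unfolding kern_def by (auto simp: powr_powr)

lemma K_int_t:
  assumes u: "finite u" and y: "\<And>j. j \<in> u \<Longrightarrow> y j \<in> {0..1}" and r: "0 < r" and \<beta>: "-1 < (\<alpha> - 1) * r"
  shows "(\<integral>\<^sup>+t. ennreal (\<bar>\<Prod>j\<in>u. kern \<alpha> (y j) (t j)\<bar> powr r) \<partial>cube_measure u) < \<infinity>"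
proof -
  interpret product_sigma_finite "\<lambda>_::nat. U01" by (rule psf)
  have "(\<integral>\<^sup>+t. ennreal (\<bar>\<Prod>j\<in>u. kern \<alpha> (y j) (t j)\<bar> powr r) \<partial>cube_measure u)
      = (\<integral>\<^sup>+t. (\<Prod>j\<in>u. (\<lambda>j z. ennreal (if z < y j then (y j - z) powr ((\<alpha> - 1) * r) else 0)) j (t j)) \<partial>PiM u (\<lambda>_. U01))"
    unfolding cm
    by (intro nn_integral_cong)
       (simp add: prod_nonneg kern_nonneg prod_powr_distrib kern_powr r prod_ennreal)
  also have "\<dots> = (\<Prod>j\<in>u. \<integral>\<^sup>+z. ennreal (if z < y j then (y j - z) powr ((\<alpha> - 1) * r) else 0) \<partial>U01)"
    by (rule product_nn_integral_prod[OF u]) (intro U01_meas, measurable)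
  also have "\<dots> = (\<Prod>j\<in>u. ennreal (y j powr ((\<alpha> - 1) * r + 1) / ((\<alpha> - 1) * r + 1)))"
    using y \<beta> by (intro prod.cong refl kern_int_t) auto
  also have "\<dots> = ennreal (\<Prod>j\<in>u. y j powr ((\<alpha> - 1) * r + 1) / ((\<alpha> - 1) * r + 1))"
    using \<beta> by (intro prod_ennreal) auto
  also have "\<dots> < \<infinity>" by simp
  finally show ?thesis .
qed

lemma K_int_y:
  assumes S: "finite S" and u: "u \<subseteq> S" and t: "\<And>j. j \<in> u \<Longrightarrow> t j \<in> {0..1}" and \<alpha>: "0 < \<alpha>"
  shows "(\<integral>\<^sup>+y. ennreal (\<Prod>j\<in>u. kern \<alpha> (y j) (t j)) \<partial>cube_measure S)
     = ennreal (\<alpha> powr (- real (card u)) * (\<Prod>j\<in>u. (1 - t j) powr \<alpha>))"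
proof -
  interpret product_prob_space "\<lambda>_::nat. U01" by (rule ppsU)
  define g where "g j z = (if j \<in> u then ennreal (kern \<alpha> z (t j)) else 1)" for j z
  have "(\<integral>\<^sup>+y. ennreal (\<Prod>j\<in>u. kern \<alpha> (y j) (t j)) \<partial>cube_measure S)
      = (\<integral>\<^sup>+y. (\<Prod>j\<in>S. g j (y j)) \<partial>PiM S (\<lambda>_. U01))"
  proof (unfold cm, intro nn_integral_cong)
    fix y
    have "(\<Prod>j\<in>S. g j (y j)) = (\<Prod>j\<in>u. g j (y j))"
      using S u by (intro prod.mono_neutral_right) (auto simp: g_def)
    also have "\<dots> = (\<Prod>j\<in>u. ennreal (kern \<alpha> (y j) (t j)))"
      by (intro prod.cong) (auto simp: g_def)
    finally show "ennreal (\<Prod>j\<in>u. kern \<alpha> (y j) (t j)) = (\<Prod>j\<in>S. g j (y j))"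
      by (simp add: prod_ennreal kern_nonneg)
  qed
  also have "\<dots> = (\<Prod>j\<in>S. integral\<^sup>N U01 (g j))"
    by (rule product_nn_integral_prod[OF S]) (auto simp: g_def intro!: U01_meas)
  also have "\<dots> = (\<Prod>j\<in>u. integral\<^sup>N U01 (g j))"
  proof (rule prod.mono_neutral_right[OF S u], safe)
    fix j assume "j \<in> S" "j \<notin> u"
    then have "g j = (\<lambda>_. 1)" by (auto simp: g_def)
    moreover have "emeasure U01 (space U01) = 1" using U01_prob by (rule prob_space.emeasure_space_1)
    ultimately show "integral\<^sup>N U01 (g j) = 1" by simp
  qed
  also have "\<dots> = (\<Prod>j\<in>u. ennreal ((1 - t j) powr \<alpha> / \<alpha>))"
  proof (intro prod.cong refl)
    fix j assume j: "j \<in> u"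
    have "integral\<^sup>N U01 (g j) = (\<integral>\<^sup>+x. ennreal (if t j < x then (x - t j) powr (\<alpha> - 1) else 0) \<partial>U01)"
      using j by (intro nn_integral_cong) (simp add: g_def kern_def)
    also have "\<dots> = ennreal ((1 - t j) powr (\<alpha> - 1 + 1) / (\<alpha> - 1 + 1))"
      using t[OF j] \<alpha> by (intro kern_int_x) auto
    finally show "integral\<^sup>N U01 (g j) = ennreal ((1 - t j) powr \<alpha> / \<alpha>)" by simp
  qed
  also have "\<dots> = ennreal (\<Prod>j\<in>u. (1 - t j) powr \<alpha> / \<alpha>)"
    using \<alpha> by (intro prod_ennreal) auto
  also have "(\<Prod>j\<in>u. (1 - t j) powr \<alpha> / \<alpha>) = \<alpha> powr (- real (card u)) * (\<Prod>j\<in>u. (1 - t j) powr \<alpha>)"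
    using \<alpha> by (simp add: prod_dividef powr_minus powr_realpow divide_inverse mult.commute prod.distrib power_inverse)
  finally show ?thesis .
qed

lemma Lp_count_fin: "finite U \<Longrightarrow> Lp_norm (count_space U) (ereal r) c = enn_powr (\<Sum>u\<in>U. ennreal (\<bar>c u\<bar> powr r)) (1/r)"
  by (simp add: Lp_norm_fin nn_integral_count_space_finite)

lemma Lp_count_inf:
  assumes "finite U" "U \<noteq> {}"
  shows "Lp_norm (count_space U) \<infinity> c = Max ((\<lambda>u. ennreal \<bar>c u\<bar>) ` U)"
proof -
  let ?f = "\<lambda>u. ennreal \<bar>c u\<bar>"
  have "Lp_norm (count_space U) \<infinity> c = Inf {z. \<forall>u\<in>U. ?f u \<le> z}"
    unfolding Lp_norm_inf by (subst esssup_eq_AE) (auto simp: AE_count_space)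
  also have "\<dots> = Max (?f ` U)"
  proof (rule antisym)
    show "Inf {z. \<forall>u\<in>U. ?f u \<le> z} \<le> Max (?f ` U)"
      using assms by (intro Inf_lower) auto
    show "Max (?f ` U) \<le> Inf {z. \<forall>u\<in>U. ?f u \<le> z}"
      using assms by (intro Inf_greatest) auto
  qed
  finally show ?thesis .
qed

lemma qform_cases:
  assumes "q = \<infinity> \<or> (\<exists>r. q = ereal r \<and> 0 < r)"
  obtains "q = \<infinity>" | r where "q = ereal r" "0 < r"
  using assms by blast

lemma Lp_count_finite:
  assumes "finite U" "U \<noteq> {}" "q = \<infinity> \<or> (\<exists>r. q = ereal r \<and> 0 < r)"
  shows "Lp_norm (count_space U) q c < \<infinity>"
  using assms(3)
proof (cases rule: qform_cases)
  case 1
  have "Max ((\<lambda>u. ennreal \<bar>c u\<bar>) ` U) \<in> (\<lambda>u. ennreal \<bar>c u\<bar>) ` U" using assms by (intro Max_in) auto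
  then show ?thesis unfolding 1 Lp_count_inf[OF assms(1,2)] by auto
next
  case (2 r)
  show ?thesis unfolding 2 Lp_count_fin[OF assms(1)] by (simp add: sum_ennreal enn_powr_ennreal sum_nonneg)
qed

lemma Lp_count_restrict:
  assumes "finite U" "V \<subseteq> U" "V \<noteq> {}" "\<And>u. u \<in> U - V \<Longrightarrow> c u = 0" "q = \<infinity> \<or> (\<exists>r. q = ereal r \<and> 0 < r)"
  shows "Lp_norm (count_space U) q c = Lp_norm (count_space V) q c"
  using assms(5)
proof (cases rule: qform_cases)
  case 1
  have fV: "finite V" using assms(1,2) finite_subset by blast
  have UnE: "U \<noteq> {}" using assms(2,3) by auto
  have "Max ((\<lambda>u. ennreal \<bar>c u\<bar>) ` U) = Max ((\<lambda>u. ennreal \<bar>c u\<bar>) ` V)"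
    proof (rule antisym)
      show "Max ((\<lambda>u. ennreal \<bar>c u\<bar>) ` U) \<le> Max ((\<lambda>u. ennreal \<bar>c u\<bar>) ` V)"
      proof (rule Max.boundedI)
        fix z assume "z \<in> (\<lambda>u. ennreal \<bar>c u\<bar>) ` U"
        then obtain u where u: "u \<in> U" "z = ennreal \<bar>c u\<bar>" by auto
        show "z \<le> Max ((\<lambda>u. ennreal \<bar>c u\<bar>) ` V)"
        proof (cases "u \<in> V")
          case True then show ?thesis using fV u by (intro Max_ge) auto
        next
          case False then show ?thesis using assms(4) u by auto
        qed
      qed (use assms(1,2,3) in auto)
      show "Max ((\<lambda>u. ennreal \<bar>c u\<bar>) ` V) \<le> Max ((\<lambda>u. ennreal \<bar>c u\<bar>) ` U)"
        using assms(1,2,3) by (intro Max_mono) auto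
    qed
  then show ?thesis unfolding 1 Lp_count_inf[OF assms(1) UnE] Lp_count_inf[OF fV assms(3)] .
next
  case (2 r)
  have fV: "finite V" using assms(1,2) finite_subset by blast
  have "(\<Sum>u\<in>U. ennreal (\<bar>c u\<bar> powr r)) = (\<Sum>u\<in>V. ennreal (\<bar>c u\<bar> powr r))"
    using assms(1,2,4) by (intro sum.mono_neutral_right) auto
  then show ?thesis unfolding 2 Lp_count_fin[OF assms(1)] Lp_count_fin[OF fV] by simp
qed

lemma dattain1:
  assumes "finite U" "U \<noteq> {}"
  shows "\<exists>w. Lp_norm (count_space U) 1 w \<le> 1 \<and> (\<Sum>u\<in>U. w u * a u) = enn2real (Lp_norm (count_space U) \<infinity> a)"
proof -
  let ?f = "\<lambda>u. ennreal \<bar>a u\<bar>"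
  have "Max (?f ` U) \<in> ?f ` U" using assms by (intro Max_in) auto
  then obtain u0 where u0: "u0 \<in> U" "?f u0 = Max (?f ` U)" by force
  define w where "w u = (if u = u0 then sgn (a u0) else 0)" for u
  have "Lp_norm (count_space U) 1 w = (\<Sum>u\<in>U. ennreal \<bar>w u\<bar>)"
    unfolding Lp_norm_one using assms by (simp add: nn_integral_count_space_finite)
  also have "\<dots> = ennreal \<bar>w u0\<bar>"
    using assms u0 by (subst sum.remove[of _ u0]) (auto simp: w_def)
  also have "\<dots> \<le> 1" by (auto simp: w_def sgn_real_def)
  finally have 1: "Lp_norm (count_space U) 1 w \<le> 1" .
  have "(\<Sum>u\<in>U. w u * a u) = w u0 * a u0"
    using assms u0 by (subst sum.remove[of _ u0]) (auto simp: w_def)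
  also have "\<dots> = \<bar>a u0\<bar>" by (auto simp: w_def sgn_real_def)
  also have "\<dots> = enn2real (Lp_norm (count_space U) \<infinity> a)"
    unfolding Lp_count_inf[OF assms] u0(2)[symmetric] by simp
  finally show ?thesis using 1 by blast
qed

lemma dattain:
  assumes "cpair q q'" "finite U" "U \<noteq> {}"
  shows "\<exists>w. Lp_norm (count_space U) q w \<le> 1 \<and> (\<Sum>u\<in>U. w u * a u) = enn2real (Lp_norm (count_space U) q' a)"
proof (cases "q = 1")
  case True
  then have "q' = \<infinity>" using assms(1) unfolding cpair_def by auto
  then show ?thesis using dattain1[OF assms(2,3)] True by simp
next
  case False
  have q'f: "q' = \<infinity> \<or> (\<exists>r. q' = ereal r \<and> 0 < r)"
    using assms(1) False unfolding cpair_def by auto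
  obtain w where w: "w \<in> borel_measurable (count_space U)" "Lp_norm (count_space U) q w \<le> 1"
    "integrable (count_space U) (\<lambda>x. w x * a x)" "(\<integral>x. w x * a x \<partial>count_space U) = enn2real (Lp_norm (count_space U) q' a)"
    using attain[OF assms(1) False, of a "count_space U"] Lp_count_finite[OF assms(2,3) q'f] by auto
  then show ?thesis using assms(2) by (auto simp: lebesgue_integral_count_space_finite)
qed

lemma dholder:
  assumes "cpair q q'" "finite U"
  shows "ennreal \<bar>\<Sum>u\<in>U. w u * a u\<bar> \<le> Lp_norm (count_space U) q w * Lp_norm (count_space U) q' a"
proof -
  have "ennreal \<bar>\<Sum>u\<in>U. w u * a u\<bar> \<le> ennreal (\<Sum>u\<in>U. \<bar>w u * a u\<bar>)"
    by (intro ennreal_leI sum_abs)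
  also have "\<dots> = (\<integral>\<^sup>+u. ennreal \<bar>w u * a u\<bar> \<partial>count_space U)"
    using assms(2) by (simp add: nn_integral_count_space_finite sum_ennreal)
  also have "\<dots> \<le> Lp_norm (count_space U) q w * Lp_norm (count_space U) q' a"
    by (rule holder[OF assms(1)]) auto
  finally show ?thesis .
qed

lemma norm_expr_eq:
  assumes "finite V" "V \<noteq> {}" "q = \<infinity> \<or> (\<exists>r. q = ereal r \<and> 0 < r)" "\<And>u. u \<in> V \<Longrightarrow> c u < \<infinity>"
  shows "(if q = \<infinity> then Max (c ` V) else enn_powr (\<Sum>u\<in>V. enn_powr (c u) (real_of_ereal q)) (1 / real_of_ereal q))
     = Lp_norm (count_space V) q (\<lambda>u. enn2real (c u))"
  using assms(3)
proof (cases rule: qform_cases)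
  case 1
  have "c ` V = (\<lambda>u. ennreal \<bar>enn2real (c u)\<bar>) ` V"
    using assms(4) by (intro image_cong refl) (simp add: ennreal_enn2real_if less_top[symmetric])
  then show ?thesis unfolding 1 Lp_count_inf[OF assms(1,2)] by simp
next
  case (2 r)
  have "(\<Sum>u\<in>V. enn_powr (c u) r) = (\<Sum>u\<in>V. ennreal (\<bar>enn2real (c u)\<bar> powr r))"
    using assms(4) by (intro sum.cong refl) (auto simp: enn_powr_def less_top[symmetric])
  then show ?thesis unfolding 2 Lp_count_fin[OF assms(1)] by simp
qed

definition KK :: "real \<Rightarrow> nat set \<Rightarrow> (nat \<Rightarrow> real) \<Rightarrow> (nat \<Rightarrow> real) \<Rightarrow> real" where
  "KK \<alpha> u y t = (\<Prod>j\<in>u. kern \<alpha> (y j) (t j))"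

definition AA :: "real \<Rightarrow> nat set \<Rightarrow> (nat \<Rightarrow> real) \<Rightarrow> real" where
  "AA \<alpha> u t = \<alpha> powr (- real (card u)) * (\<Prod>j\<in>u. (1 - t j) powr \<alpha>)"

locale setting =
  fixes \<alpha> :: real and p :: ereal and s N :: nat and x :: "nat \<Rightarrow> nat \<Rightarrow> real"
  assumes \<alpha>0: "0 < \<alpha>" and \<alpha>1: "\<alpha> \<le> 1" and p\<alpha>: "ereal (1 / \<alpha>) < p" and N1: "1 \<le> N"
    and xc: "\<forall>n<N. x n \<in> cube s"
begin

abbreviation "p' \<equiv> conj_exp p"
definition "rr = real_of_ereal p'"

lemma p_gt1: "1 < p"
proof -
  have "1 \<le> 1 / \<alpha>" using \<alpha>0 \<alpha>1 by (simp add: field_simps)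
  then have "ereal 1 \<le> ereal (1/\<alpha>)" by simp
  then show ?thesis using p\<alpha> unfolding one_ereal_def by (rule le_less_trans)
qed

lemma cp: "cpair p p'" using p_gt1 by (intro cpair_conj) simp

lemma p_ne1: "p \<noteq> 1" using p_gt1 by auto

lemma rr: "p' = ereal rr" "1 \<le> rr" "-1 < (\<alpha> - 1) * rr"
proof -
  have "p' = ereal rr \<and> 1 \<le> rr \<and> -1 < (\<alpha> - 1) * rr"
  proof (cases p)
    case (real r)
    have r1: "1 < r" using p_gt1 real by (simp add: one_ereal_def)
    have ra: "1 < \<alpha> * r" using p\<alpha> real \<alpha>0 by (simp add: field_simps)
    have eq: "p' = ereal (r / (r - 1))" using real r1 by (simp add: conj_exp_def)
    have "-1 < (\<alpha> - 1) * (r / (r - 1))" using r1 ra by (simp add: field_simps)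
    moreover have "1 \<le> r / (r - 1)" using r1 by (simp add: field_simps)
    ultimately show ?thesis using eq by (simp add: rr_def)
  next
    case PInf
    then have "p' = 1" by (simp add: conj_exp_def)
    then have "rr = 1" by (simp add: rr_def)
    then show ?thesis using \<alpha>0 \<open>p' = 1\<close> by (simp add: one_ereal_def)
  next
    case MInf
    then show ?thesis using p_gt1 by simp
  qed
  then show "p' = ereal rr" "1 \<le> rr" "-1 < (\<alpha> - 1) * rr" by auto
qed

lemma rr0: "0 < rr" using rr(2) by simp

lemma p'_form: "p' = \<infinity> \<or> (\<exists>r. p' = ereal r \<and> 0 < r)" using rr rr0 by blast

lemma p_form: "p = \<infinity> \<or> (\<exists>r. p = ereal r \<and> 0 < r)"
  using p_gt1 by (cases p) auto

lemma K_meas_t: "finite u \<Longrightarrow> (\<lambda>t. KK \<alpha> u y t) \<in> borel_measurable (cube_measure u)"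
  unfolding KK_def by (intro K_meas[of u u]) (auto intro: comp_meas)

lemma K_Lp:
  assumes "finite u" "\<And>j. j \<in> u \<Longrightarrow> y j \<in> {0..1}"
  shows "Lp_norm (cube_measure u) p' (\<lambda>t. KK \<alpha> u y t) < \<infinity>"
  unfolding rr(1) Lp_fin_iff[OF rr0] KK_def
  by (rule K_int_t[OF assms]) (use rr0 rr(3) in auto)

lemma A_meas: "finite u \<Longrightarrow> AA \<alpha> u \<in> borel_measurable (cube_measure u)"
  unfolding AA_def by (intro borel_measurable_times borel_measurable_const borel_measurable_prod)
     (auto intro!: powr_real_measurable borel_measurable_diff comp_meas)

lemma A_bound: "t \<in> space (cube_measure u) \<Longrightarrow> \<bar>AA \<alpha> u t\<bar> \<le> \<alpha> powr (- real (card u))"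
proof -
  assume t: "t \<in> space (cube_measure u)"
  have "0 \<le> (\<Prod>j\<in>u. (1 - t j) powr \<alpha>)" by (simp add: prod_nonneg)
  moreover have "(\<Prod>j\<in>u. (1 - t j) powr \<alpha>) \<le> 1"
    using t \<alpha>0 by (intro prod_le_1) (auto simp: space_cm PiE_iff intro!: powr_le1)
  ultimately show ?thesis unfolding AA_def using \<alpha>0
    by (simp add: abs_mult mult_left_le)
qed

lemma A_Lp: "finite u \<Longrightarrow> Lp_norm (cube_measure u) p' (AA \<alpha> u) < \<infinity>"
  unfolding rr(1) by (rule Lp_bounded[OF _ rr0 A_meas A_bound])
    (use cm_prob in \<open>auto simp: prob_space_def\<close>)

lemma fin_sub: "u \<subseteq> {1..s} \<Longrightarrow> finite u" using finite_subset by blast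

lemma x01: "n < N \<Longrightarrow> u \<subseteq> {1..s} \<Longrightarrow> j \<in> u \<Longrightarrow> x n j \<in> {0..1}"
  using xc unfolding cube_def by auto

lemma D_eq: "frac_disc_local \<alpha> N x u t = AA \<alpha> u t + (-(1 / real N)) * (\<Sum>n<N. KK \<alpha> u (x n) t)"
  by (simp add: frac_disc_local_def AA_def KK_def)

lemma D_meas: "finite u \<Longrightarrow> frac_disc_local \<alpha> N x u \<in> borel_measurable (cube_measure u)"
  unfolding D_eq[abs_def]
  by (intro borel_measurable_add borel_measurable_times borel_measurable_const borel_measurable_sum A_meas K_meas_t)

lemma D_Lp: "u \<subseteq> {1..s} \<Longrightarrow> Lp_norm (cube_measure u) p' (frac_disc_local \<alpha> N x u) < \<infinity>"
proof -
  assume u: "u \<subseteq> {1..s}"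
  then have fu: "finite u" by (rule fin_sub)
  have sm: "(\<lambda>t. \<Sum>n<N. KK \<alpha> u (x n) t) \<in> borel_measurable (cube_measure u)"
    by (intro borel_measurable_sum K_meas_t fu)
  have "Lp_norm (cube_measure u) (ereal rr) (\<lambda>t. AA \<alpha> u t + (-(1 / real N)) * (\<Sum>n<N. KK \<alpha> u (x n) t)) < \<infinity>"
  proof (rule Lp_add_fin[OF rr0 A_meas[OF fu]])
    show "(\<lambda>t. (-(1 / real N)) * (\<Sum>n<N. KK \<alpha> u (x n) t)) \<in> borel_measurable (cube_measure u)"
      using sm by measurable
    show "Lp_norm (cube_measure u) (ereal rr) (AA \<alpha> u) < \<infinity>" using A_Lp[OF fu] rr(1) by simp
    show "Lp_norm (cube_measure u) (ereal rr) (\<lambda>t. (-(1 / real N)) * (\<Sum>n<N. KK \<alpha> u (x n) t)) < \<infinity>"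
    proof (rule Lp_cmult_fin[OF _ sm])
      show "ereal rr = \<infinity> \<or> (\<exists>r. ereal rr = ereal r \<and> 0 < r)" using rr0 by auto
      show "Lp_norm (cube_measure u) (ereal rr) (\<lambda>t. \<Sum>n<N. KK \<alpha> u (x n) t) < \<infinity>"
        using K_Lp[OF fu] x01[OF _ u] rr(1)
        by (intro Lp_sum_fin[OF rr0] K_meas_t fu) auto
    qed
  qed
  then show ?thesis unfolding D_eq[abs_def] rr(1) .
qed

lemma one_Lp: "Lp_norm (cube_measure u) p' (\<lambda>_. 1) < \<infinity>"
  unfolding rr(1) by (rule Lp_bounded[OF _ rr0, of _ _ 1]) (use cm_prob in \<open>auto simp: prob_space_def\<close>)

context
  fixes u Fu assumes F: "memLp (cube_measure u) p Fu" and u: "u \<subseteq> {1..s}"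
begin

lemma Fm: "Fu \<in> borel_measurable (cube_measure u)" using F by (simp add: memLp_def)
lemma Ff: "Lp_norm (cube_measure u) p Fu < \<infinity>" using F by (simp add: memLp_def)

lemma FK_int: "(\<And>j. j \<in> u \<Longrightarrow> y j \<in> {0..1}) \<Longrightarrow> integrable (cube_measure u) (\<lambda>t. Fu t * KK \<alpha> u y t)"
  by (rule holder_integrable(1)[OF cp Fm K_meas_t Ff K_Lp]) (use fin_sub[OF u] in auto)

lemma FA_int: "integrable (cube_measure u) (\<lambda>t. Fu t * AA \<alpha> u t)"
  by (rule holder_integrable(1)[OF cp Fm A_meas Ff A_Lp]) (use fin_sub[OF u] in auto)

lemma FD_int: "integrable (cube_measure u) (\<lambda>t. Fu t * frac_disc_local \<alpha> N x u t)"
  by (rule holder_integrable(1)[OF cp Fm D_meas Ff D_Lp]) (use fin_sub[OF u] u in auto)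

lemma F_L1: "(\<integral>\<^sup>+t. ennreal \<bar>Fu t\<bar> \<partial>cube_measure u) < \<infinity>"
proof -
  have "(\<integral>\<^sup>+t. ennreal \<bar>Fu t * 1\<bar> \<partial>cube_measure u) \<le> Lp_norm (cube_measure u) p Fu * Lp_norm (cube_measure u) p' (\<lambda>_. 1)"
    by (rule holder[OF cp Fm]) simp
  also have "\<dots> < \<infinity>" using Ff one_Lp by (simp add: ennreal_mult_less_top)
  finally show ?thesis by simp
qed

lemma fubini_part:
  shows "integrable (cube_measure {1..s}) (\<lambda>y. \<integral>t. Fu t * KK \<alpha> u y t \<partial>cube_measure u)"
    and "(\<integral>y. (\<integral>t. Fu t * KK \<alpha> u y t \<partial>cube_measure u) \<partial>cube_measure {1..s}) = (\<integral>t. Fu t * AA \<alpha> u t \<partial>cube_measure u)"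
proof -
  let ?S = "cube_measure {1..s}" and ?U = "cube_measure u"
  interpret pair_sigma_finite ?S ?U by (rule cm_pair)
  have fu: "finite u" by (rule fin_sub[OF u])
  have Fm2: "(\<lambda>z. Fu (snd z)) \<in> borel_measurable (?S \<Otimes>\<^sub>M ?U)"
    by (rule measurable_compose[OF measurable_snd Fm])
  have Km2: "(\<lambda>z. KK \<alpha> u (fst z) (snd z)) \<in> borel_measurable (?S \<Otimes>\<^sub>M ?U)"
    unfolding KK_def
  proof (rule K_meas[of u u])
    fix j assume j: "j \<in> u"
    then show "(\<lambda>z. fst z j) \<in> borel_measurable (?S \<Otimes>\<^sub>M ?U)"
      using u by (intro measurable_compose[OF measurable_fst comp_meas]) auto
    show "(\<lambda>z. snd z j) \<in> borel_measurable (?S \<Otimes>\<^sub>M ?U)"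
      using j by (intro measurable_compose[OF measurable_snd comp_meas]) auto
  qed simp
  have phim: "(\<lambda>(y, t). Fu t * KK \<alpha> u y t) \<in> borel_measurable (?S \<Otimes>\<^sub>M ?U)"
    using Fm2 Km2 by (simp add: case_prod_beta' borel_measurable_times)
  have Kint: "(\<integral>\<^sup>+y. ennreal (KK \<alpha> u y t) \<partial>?S) = ennreal (AA \<alpha> u t)" if t: "t \<in> space ?U" for t
    unfolding KK_def AA_def using t u \<alpha>0 by (intro K_int_y) (auto simp: space_cm PiE_iff)
  have Kmy: "(\<lambda>y. KK \<alpha> u y t) \<in> borel_measurable ?S" for t
    unfolding KK_def using u by (intro K_meas[of u u]) (auto intro: comp_meas)
  have "(\<integral>\<^sup>+z. ennreal (norm ((\<lambda>(y, t). Fu t * KK \<alpha> u y t) z)) \<partial>(?S \<Otimes>\<^sub>M ?U))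
      = (\<integral>\<^sup>+t. (\<integral>\<^sup>+y. ennreal (norm ((\<lambda>(y, t). Fu t * KK \<alpha> u y t) (y, t))) \<partial>?S) \<partial>?U)"
    using phim by (intro nn_integral_snd[symmetric]) (simp add: Fm2 Km2 case_prod_beta')
  also have "\<dots> = (\<integral>\<^sup>+t. ennreal \<bar>Fu t\<bar> * ennreal (AA \<alpha> u t) \<partial>?U)"
  proof (intro nn_integral_cong)
    fix t assume t: "t \<in> space ?U"
    have "(\<integral>\<^sup>+y. ennreal (norm ((\<lambda>(y, t). Fu t * KK \<alpha> u y t) (y, t))) \<partial>?S)
        = (\<integral>\<^sup>+y. ennreal \<bar>Fu t\<bar> * ennreal (KK \<alpha> u y t) \<partial>?S)"
      by (intro nn_integral_cong) (simp add: abs_mult KK_def prod_nonneg kern_nonneg ennreal_mult)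
    also have "\<dots> = ennreal \<bar>Fu t\<bar> * (\<integral>\<^sup>+y. ennreal (KK \<alpha> u y t) \<partial>?S)"
      using Kmy by (intro nn_integral_cmult) measurable
    finally show "(\<integral>\<^sup>+y. ennreal (norm ((\<lambda>(y, t). Fu t * KK \<alpha> u y t) (y, t))) \<partial>?S)
        = ennreal \<bar>Fu t\<bar> * ennreal (AA \<alpha> u t)" using Kint[OF t] by simp
  qed
  also have "\<dots> \<le> (\<integral>\<^sup>+t. ennreal \<bar>Fu t\<bar> * ennreal (\<alpha> powr (- real (card u))) \<partial>?U)"
    using A_bound by (intro nn_integral_mono mult_left_mono ennreal_leI) (auto intro: order_trans[OF abs_ge_self])
  also have "\<dots> = (\<integral>\<^sup>+t. ennreal \<bar>Fu t\<bar> \<partial>?U) * ennreal (\<alpha> powr (- real (card u)))"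
    using Fm by (intro nn_integral_multc) measurable
  also have "\<dots> < \<infinity>" using F_L1 by (simp add: ennreal_mult_less_top)
  finally have intg: "integrable (?S \<Otimes>\<^sub>M ?U) (\<lambda>(y, t). Fu t * KK \<alpha> u y t)"
    using phim by (intro integrableI_bounded) auto
  show "integrable ?S (\<lambda>y. \<integral>t. Fu t * KK \<alpha> u y t \<partial>?U)"
    using integrable_fst'[OF intg] by simp
  have "(\<integral>y. (\<integral>t. Fu t * KK \<alpha> u y t \<partial>?U) \<partial>?S) = (\<integral>t. (\<integral>y. Fu t * KK \<alpha> u y t \<partial>?S) \<partial>?U)"
    using Fubini_integral[OF intg] by simp
  also have "\<dots> = (\<integral>t. Fu t * AA \<alpha> u t \<partial>?U)"
  proof (rule Bochner_Integration.integral_cong[OF refl])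
    fix t assume t: "t \<in> space ?U"
    have "(\<integral>y. KK \<alpha> u y t \<partial>?S) = enn2real (\<integral>\<^sup>+y. ennreal (KK \<alpha> u y t) \<partial>?S)"
      using Kmy by (intro integral_eq_nn_integral) (auto simp: KK_def prod_nonneg kern_nonneg)
    also have "\<dots> = AA \<alpha> u t" using Kint[OF t] \<alpha>0 by (simp add: AA_def prod_nonneg)
    finally show "(\<integral>y. Fu t * KK \<alpha> u y t \<partial>?S) = Fu t * AA \<alpha> u t" by simp
  qed
  finally show "(\<integral>y. (\<integral>t. Fu t * KK \<alpha> u y t \<partial>?U) \<partial>?S) = (\<integral>t. Fu t * AA \<alpha> u t \<partial>?U)" .
qed

end

lemma FB_eq:
  assumes F: "memLp (cube_measure u) p Fu" and u: "u \<subseteq> {1..s}"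
  shows "integrable (cube_measure u) (\<lambda>t. Fu t * ((1 / real N) * (\<Sum>n<N. KK \<alpha> u (x n) t)))"
    and "(\<integral>t. Fu t * ((1 / real N) * (\<Sum>n<N. KK \<alpha> u (x n) t)) \<partial>cube_measure u)
        = (1 / real N) * (\<Sum>n<N. \<integral>t. Fu t * KK \<alpha> u (x n) t \<partial>cube_measure u)"
proof -
  have eq: "(\<lambda>t. Fu t * ((1 / real N) * (\<Sum>n<N. KK \<alpha> u (x n) t))) = (\<lambda>t. (1 / real N) * (\<Sum>n<N. Fu t * KK \<alpha> u (x n) t))"
    by (simp add: sum_distrib_left algebra_simps)
  have ii: "integrable (cube_measure u) (\<lambda>t. Fu t * KK \<alpha> u (x n) t)" if "n \<in> {..<N}" for n
  proof (rule FK_int[OF F u])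
    fix j assume "j \<in> u" then show "x n j \<in> {0..1}" using x01[OF _ u] that by auto
  qed
  show "integrable (cube_measure u) (\<lambda>t. Fu t * ((1 / real N) * (\<Sum>n<N. KK \<alpha> u (x n) t)))"
    unfolding eq using ii by (intro integrable_mult_right integrable_sum) auto
  show "(\<integral>t. Fu t * ((1 / real N) * (\<Sum>n<N. KK \<alpha> u (x n) t)) \<partial>cube_measure u)
        = (1 / real N) * (\<Sum>n<N. \<integral>t. Fu t * KK \<alpha> u (x n) t \<partial>cube_measure u)"
    unfolding eq using ii by (simp add: Bochner_Integration.integral_sum)
qed

lemma err_formula:
  assumes R: "represents \<alpha> s p F f"
  shows "(\<integral>y. f y \<partial>cube_measure {1..s}) - QMC N x f
    = (\<Sum>u\<in>Pow {1..s}. Gamma \<alpha> powr (- real (card u)) * (\<integral>t. F u t * frac_disc_local \<alpha> N x u t \<partial>cube_measure u))"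
proof -
  let ?S = "cube_measure {1..s}"
  define G where "G u = Gamma \<alpha> powr (- real (card u))" for u :: "nat set"
  define I where "I u y = (\<integral>t. F u t * KK \<alpha> u y t \<partial>cube_measure u)" for u y
  have mem: "memLp (cube_measure u) p (F u)" if "u \<in> Pow {1..s}" for u
    using R that unfolding represents_def by auto
  have feq: "f y = (\<Sum>u\<in>Pow {1..s}. G u * I u y)" if "y \<in> cube s" for y
    using R that unfolding represents_def G_def I_def KK_def by auto
  have sp: "y \<in> cube s" if "y \<in> space ?S" for y
    using that by (auto simp: space_cm cube_def PiE_iff)
  have "(\<integral>y. f y \<partial>?S) = (\<integral>y. (\<Sum>u\<in>Pow {1..s}. G u * I u y) \<partial>?S)"
    using feq sp by (intro Bochner_Integration.integral_cong) auto
  also have "\<dots> = (\<Sum>u\<in>Pow {1..s}. (\<integral>y. G u * I u y \<partial>?S))"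
    using fubini_part(1)[OF mem] by (intro Bochner_Integration.integral_sum integrable_mult_right) (auto simp: I_def)
  also have "\<dots> = (\<Sum>u\<in>Pow {1..s}. G u * (\<integral>y. I u y \<partial>?S))" by simp
  also have "\<dots> = (\<Sum>u\<in>Pow {1..s}. G u * (\<integral>t. F u t * AA \<alpha> u t \<partial>cube_measure u))"
    using fubini_part(2)[OF mem] by (intro sum.cong refl) (auto simp: I_def)
  finally have E1: "(\<integral>y. f y \<partial>?S) = \<dots>" .
  have "QMC N x f = (1 / real N) * (\<Sum>n<N. \<Sum>u\<in>Pow {1..s}. G u * I u (x n))"
    unfolding QMC_def using feq xc by (intro arg_cong2[where f="(*)"] sum.cong refl) auto
  also have "\<dots> = (\<Sum>u\<in>Pow {1..s}. G u * ((1 / real N) * (\<Sum>n<N. I u (x n))))"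
    by (subst sum.swap) (simp add: sum_distrib_left algebra_simps)
  also have "\<dots> = (\<Sum>u\<in>Pow {1..s}. G u * (\<integral>t. F u t * ((1 / real N) * (\<Sum>n<N. KK \<alpha> u (x n) t)) \<partial>cube_measure u))"
    using FB_eq(2)[OF mem] by (intro sum.cong refl) (auto simp: I_def)
  finally have E2: "QMC N x f = \<dots>" .
  have E3: "(\<integral>t. F u t * AA \<alpha> u t \<partial>cube_measure u) - (\<integral>t. F u t * ((1 / real N) * (\<Sum>n<N. KK \<alpha> u (x n) t)) \<partial>cube_measure u)
      = (\<integral>t. F u t * frac_disc_local \<alpha> N x u t \<partial>cube_measure u)" if u: "u \<in> Pow {1..s}" for u
  proof -
    have "(\<integral>t. F u t * AA \<alpha> u t \<partial>cube_measure u) - (\<integral>t. F u t * ((1 / real N) * (\<Sum>n<N. KK \<alpha> u (x n) t)) \<partial>cube_measure u)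
       = (\<integral>t. F u t * AA \<alpha> u t - F u t * ((1 / real N) * (\<Sum>n<N. KK \<alpha> u (x n) t)) \<partial>cube_measure u)"
      using u FA_int[OF mem[OF u]] FB_eq(1)[OF mem[OF u]] by (intro Bochner_Integration.integral_diff[symmetric]) auto
    also have "\<dots> = (\<integral>t. F u t * frac_disc_local \<alpha> N x u t \<partial>cube_measure u)"
      by (intro Bochner_Integration.integral_cong refl) (simp add: D_eq algebra_simps)
    finally show ?thesis .
  qed
  show ?thesis unfolding E1 E2 G_def[symmetric] sum_subtractf[symmetric] right_diff_distrib[symmetric]
    using E3 by (intro sum.cong refl) auto
qed

end

lemma cpair_forms:
  assumes "cpair q q'"
  shows "q = \<infinity> \<or> (\<exists>r. q = ereal r \<and> 0 < r)" "q' = \<infinity> \<or> (\<exists>r. q' = ereal r \<and> 0 < r)"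
proof -
  have *: "q = \<infinity> \<or> (\<exists>r. q = ereal r \<and> 0 < r)" if "cpair q q'" for q q'
    using that unfolding cpair_def by (auto simp: one_ereal_def)
  show "q = \<infinity> \<or> (\<exists>r. q = ereal r \<and> 0 < r)" by (rule *[OF assms])
  show "q' = \<infinity> \<or> (\<exists>r. q' = ereal r \<and> 0 < r)" by (rule *[OF cpair_sym[OF assms]])
qed

lemma Lp_zero: "0 < r \<Longrightarrow> Lp_norm M (ereal r) (\<lambda>_. 0) = 0"
  by (simp add: Lp_norm_fin enn_powr_def)

context setting
begin

lemma D_empty: "frac_disc_local \<alpha> N x {} t = 0"
  using N1 \<alpha>0 by (simp add: frac_disc_local_def)

definition "aa u = enn2real (Lp_norm (cube_measure u) p' (frac_disc_local \<alpha> N x u))"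

lemma aa_empty: "aa {} = 0"
  unfolding aa_def D_empty[abs_def] rr(1) Lp_zero[OF rr0] by simp

lemma frac_disc_eq:
  assumes s1: "1 \<le> s" and q: "1 \<le> q"
  shows "frac_disc \<alpha> s p' (conj_exp q) N x = Lp_norm (count_space (Pow {1..s})) (conj_exp q) aa"
proof -
  have cq: "cpair q (conj_exp q)" by (rule cpair_conj[OF q])
  have ne: "Pow {1..s} - {{}} \<noteq> {}" using s1 by (auto intro!: exI[of _ "{1}"])
  have "frac_disc \<alpha> s p' (conj_exp q) N x = Lp_norm (count_space (Pow {1..s} - {{}})) (conj_exp q) aa"
    unfolding frac_disc_def Let_def aa_def
  proof (rule norm_expr_eq[OF _ ne cpair_forms(2)[OF cq]])
    fix u assume "u \<in> Pow {1..s} - {{}}"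
    then show "Lp_norm (cube_measure u) p' (frac_disc_local \<alpha> N x u) < \<infinity>" by (intro D_Lp) auto
  qed simp
  also have "\<dots> = Lp_norm (count_space (Pow {1..s})) (conj_exp q) aa"
    using aa_empty by (intro Lp_count_restrict[symmetric] ne cpair_forms(2)[OF cq]) auto
  finally show ?thesis .
qed

lemma rep_norm_eq:
  assumes q: "1 \<le> q" and F: "\<And>u. u \<in> Pow {1..s} \<Longrightarrow> Lp_norm (cube_measure u) p (F u) < \<infinity>"
  shows "rep_norm \<alpha> s p q F = Lp_norm (count_space (Pow {1..s})) q
     (\<lambda>u. Gamma \<alpha> powr (- real (card u)) * enn2real (Lp_norm (cube_measure u) p (F u)))"
proof -
  have cq: "cpair q (conj_exp q)" by (rule cpair_conj[OF q])
  have "rep_norm \<alpha> s p q F = Lp_norm (count_space (Pow {1..s})) q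
     (\<lambda>u. enn2real (ennreal (Gamma \<alpha> powr (- real (card u))) * Lp_norm (cube_measure u) p (F u)))"
    unfolding rep_norm_def Let_def
  proof (rule norm_expr_eq[OF _ _ cpair_forms(1)[OF cq]])
    fix u assume "u \<in> Pow {1..s}"
    then have "Lp_norm (cube_measure u) p (F u) < \<infinity>" by (rule F)
    then show "ennreal (Gamma \<alpha> powr (- real (card u))) * Lp_norm (cube_measure u) p (F u) < \<infinity>"
      by (simp add: ennreal_mult_less_top)
  qed auto
  also have "\<dots> = Lp_norm (count_space (Pow {1..s})) q
     (\<lambda>u. Gamma \<alpha> powr (- real (card u)) * enn2real (Lp_norm (cube_measure u) p (F u)))"
    by (simp add: enn2real_mult)
  finally show ?thesis .
qed

lemma Lp_enn: "Lp_norm M e g < \<infinity> \<Longrightarrow> Lp_norm M e g = ennreal (enn2real (Lp_norm M e g))"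
  by (simp add: less_top)

lemma upper_one:
  assumes q: "1 \<le> q" and R: "represents \<alpha> s p F f"
  shows "ennreal \<bar>(\<integral>y. f y \<partial>cube_measure {1..s}) - QMC N x f\<bar>
     \<le> rep_norm \<alpha> s p q F * Lp_norm (count_space (Pow {1..s})) (conj_exp q) aa"
proof -
  have cq: "cpair q (conj_exp q)" by (rule cpair_conj[OF q])
  have mem: "memLp (cube_measure u) p (F u)" if "u \<in> Pow {1..s}" for u
    using R that unfolding represents_def by auto
  define eF where "eF u = enn2real (Lp_norm (cube_measure u) p (F u))" for u
  define cr where "cr u = Gamma \<alpha> powr (- real (card u)) * eF u" for u
  have G0: "0 < Gamma \<alpha> powr (- real (card u))" for u using Gamma_real_pos[OF \<alpha>0] by simp
  have hb: "\<bar>\<integral>t. F u t * frac_disc_local \<alpha> N x u t \<partial>cube_measure u\<bar> \<le> eF u * aa u" if u: "u \<in> Pow {1..s}" for u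
  proof -
    have uu: "u \<subseteq> {1..s}" using u by auto
    have LF: "Lp_norm (cube_measure u) p (F u) < \<infinity>" using mem[OF u] by (simp add: memLp_def)
    have LD: "Lp_norm (cube_measure u) p' (frac_disc_local \<alpha> N x u) < \<infinity>" by (rule D_Lp[OF uu])
    have "ennreal \<bar>\<integral>t. F u t * frac_disc_local \<alpha> N x u t \<partial>cube_measure u\<bar>
       \<le> Lp_norm (cube_measure u) p (F u) * Lp_norm (cube_measure u) p' (frac_disc_local \<alpha> N x u)"
      by (rule holder_integrable(2)[OF cp _ D_meas LF LD]) (use mem[OF u] fin_sub[OF uu] in \<open>auto simp: memLp_def\<close>)
    also have "\<dots> = ennreal (eF u * aa u)"
      unfolding eF_def aa_def by (subst Lp_enn[OF LF], subst Lp_enn[OF LD]) (simp add: ennreal_mult)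
    finally show ?thesis by (simp add: eF_def aa_def ennreal_le_iff)
  qed
  have "\<bar>(\<integral>y. f y \<partial>cube_measure {1..s}) - QMC N x f\<bar>
     = \<bar>\<Sum>u\<in>Pow {1..s}. Gamma \<alpha> powr (- real (card u)) * (\<integral>t. F u t * frac_disc_local \<alpha> N x u t \<partial>cube_measure u)\<bar>"
    unfolding err_formula[OF R] ..
  also have "\<dots> \<le> (\<Sum>u\<in>Pow {1..s}. \<bar>Gamma \<alpha> powr (- real (card u)) * (\<integral>t. F u t * frac_disc_local \<alpha> N x u t \<partial>cube_measure u)\<bar>)"
    by (rule sum_abs)
  also have "\<dots> \<le> (\<Sum>u\<in>Pow {1..s}. cr u * aa u)"
  proof (intro sum_mono)
    fix u assume u: "u \<in> Pow {1..s}"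
    have "\<bar>Gamma \<alpha> powr (- real (card u)) * (\<integral>t. F u t * frac_disc_local \<alpha> N x u t \<partial>cube_measure u)\<bar>
       = Gamma \<alpha> powr (- real (card u)) * \<bar>\<integral>t. F u t * frac_disc_local \<alpha> N x u t \<partial>cube_measure u\<bar>"
      using G0[of u] by (simp add: abs_mult)
    also have "\<dots> \<le> Gamma \<alpha> powr (- real (card u)) * (eF u * aa u)"
      using G0[of u] hb[OF u] by (intro mult_left_mono) auto
    finally show "\<bar>Gamma \<alpha> powr (- real (card u)) * (\<integral>t. F u t * frac_disc_local \<alpha> N x u t \<partial>cube_measure u)\<bar> \<le> cr u * aa u"
      by (simp add: cr_def)
  qed
  also have "\<dots> = \<bar>\<Sum>u\<in>Pow {1..s}. cr u * aa u\<bar>"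
    by (intro abs_of_nonneg[symmetric] sum_nonneg) (auto simp: cr_def eF_def aa_def G0 less_imp_le)
  finally have "ennreal \<bar>(\<integral>y. f y \<partial>cube_measure {1..s}) - QMC N x f\<bar> \<le> ennreal \<bar>\<Sum>u\<in>Pow {1..s}. cr u * aa u\<bar>"
    by (rule ennreal_leI)
  also have "\<dots> \<le> Lp_norm (count_space (Pow {1..s})) q cr * Lp_norm (count_space (Pow {1..s})) (conj_exp q) aa"
    by (rule dholder[OF cq]) simp
  also have "Lp_norm (count_space (Pow {1..s})) q cr = rep_norm \<alpha> s p q F"
    unfolding cr_def eF_def using mem by (intro rep_norm_eq[OF q, symmetric]) (auto simp: memLp_def)
  finally show ?thesis .
qed

lemma D_fin:
  assumes q: "1 \<le> q"
  shows "Lp_norm (count_space (Pow {1..s})) (conj_exp q) aa < \<infinity>"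
  by (rule Lp_count_finite[OF _ _ cpair_forms(2)[OF cpair_conj[OF q]]]) auto

lemma e_wor_le:
  assumes q: "1 \<le> q"
  shows "e_wor \<alpha> s p q N x \<le> Lp_norm (count_space (Pow {1..s})) (conj_exp q) aa"
  unfolding e_wor_def
proof (rule Sup_least, safe)
  fix f assume fH: "f \<in> H_space \<alpha> s p" and fn: "H_norm \<alpha> s p q f \<le> 1"
  define D where "D = Lp_norm (count_space (Pow {1..s})) (conj_exp q) aa"
  define e where "e = \<bar>(\<integral>y. f y \<partial>cube_measure {1..s}) - QMC N x f\<bar>"
  define d where "d = enn2real D"
  have Dd: "D = ennreal d" and d0: "0 \<le> d" using D_fin[OF q] unfolding D_def d_def by (auto simp: less_top)
  have e0: "0 \<le> e" unfolding e_def by simp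
  have key: "ennreal e \<le> rep_norm \<alpha> s p q F * D" if "represents \<alpha> s p F f" for F
    unfolding e_def D_def by (rule upper_one[OF q that])
  obtain F0 where F0: "represents \<alpha> s p F0 f" using fH unfolding H_space_def by auto
  show "ennreal e \<le> D"
  proof (cases "d = 0")
    case True
    then show ?thesis using key[OF F0] Dd by simp
  next
    case False
    then have dp: "0 < d" using d0 by simp
    show ?thesis
    proof (rule ccontr)
      assume "\<not> ennreal e \<le> D"
      then have "\<not> e \<le> d" unfolding Dd using ennreal_leI by blast
      then have ed: "d < e" by simp
      define y where "y = (e + d) / (2 * d)"
      have y1: "1 < y" unfolding y_def using dp ed by (simp add: field_simps)
      have "Inf {rep_norm \<alpha> s p q F | F. represents \<alpha> s p F f} < ennreal y"
        using fn y1 unfolding H_norm_def by (meson ennreal_less_iff le_less_trans less_imp_le one_less_ennreal y1 zero_le_one)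
      then obtain r where r: "r \<in> {rep_norm \<alpha> s p q F | F. represents \<alpha> s p F f}" "r < ennreal y"
        by (auto simp: Inf_less_iff)
      then obtain F where F: "represents \<alpha> s p F f" "r = rep_norm \<alpha> s p q F" by auto
      have "ennreal e \<le> r * ennreal d" using key[OF F(1)] F(2) Dd by simp
      also have "\<dots> \<le> ennreal y * ennreal d" using r(2) by (intro mult_right_mono) auto
      also have "\<dots> = ennreal ((e + d) / 2)" using dp y1 by (simp add: ennreal_mult[symmetric] y_def)
      finally have "e \<le> (e + d) / 2" using ed dp by (simp add: ennreal_le_iff)
      then show False using ed by simp
    qed
  qed
qed

lemma e_wor_ge:
  assumes q: "1 \<le> q"
  shows "Lp_norm (count_space (Pow {1..s})) (conj_exp q) aa \<le> e_wor \<alpha> s p q N x"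
proof -
  let ?U = "Pow {1..s}"
  define D where "D = Lp_norm (count_space ?U) (conj_exp q) aa"
  have cq: "cpair q (conj_exp q)" by (rule cpair_conj[OF q])
  obtain w where w1: "Lp_norm (count_space ?U) q w \<le> 1" and w2: "(\<Sum>u\<in>?U. w u * aa u) = enn2real D"
    using dattain[OF cq, of ?U aa] unfolding D_def by auto
  have "\<forall>u\<in>?U. \<exists>g. g \<in> borel_measurable (cube_measure u) \<and> Lp_norm (cube_measure u) p g \<le> 1
     \<and> integrable (cube_measure u) (\<lambda>t. g t * frac_disc_local \<alpha> N x u t)
     \<and> (\<integral>t. g t * frac_disc_local \<alpha> N x u t \<partial>cube_measure u) = aa u"
  proof
    fix u assume u: "u \<in> ?U"
    then have uu: "u \<subseteq> {1..s}" by auto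
    show "\<exists>g. g \<in> borel_measurable (cube_measure u) \<and> Lp_norm (cube_measure u) p g \<le> 1
     \<and> integrable (cube_measure u) (\<lambda>t. g t * frac_disc_local \<alpha> N x u t)
     \<and> (\<integral>t. g t * frac_disc_local \<alpha> N x u t \<partial>cube_measure u) = aa u"
      unfolding aa_def by (rule attain[OF cp p_ne1 D_meas[OF fin_sub[OF uu]] D_Lp[OF uu]])
  qed
  then obtain g where gm: "\<And>u. u \<in> ?U \<Longrightarrow> g u \<in> borel_measurable (cube_measure u)"
    and g1: "\<And>u. u \<in> ?U \<Longrightarrow> Lp_norm (cube_measure u) p (g u) \<le> 1"
    and gi: "\<And>u. u \<in> ?U \<Longrightarrow> (\<integral>t. g u t * frac_disc_local \<alpha> N x u t \<partial>cube_measure u) = aa u"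
    by metis
  define G where "G u = Gamma \<alpha> powr (- real (card u))" for u :: "nat set"
  define H where "H u = Gamma \<alpha> powr (real (card u))" for u :: "nat set"
  have GH: "G u * H u = 1" for u
    unfolding G_def H_def using Gamma_real_pos[OF \<alpha>0] by (simp add: powr_add[symmetric])
  have G0: "0 < G u" "0 < H u" for u unfolding G_def H_def using Gamma_real_pos[OF \<alpha>0] by auto
  define F where "F u t = (H u * w u) * g u t" for u t
  define f where "f y = (\<Sum>u\<in>?U. G u * (\<integral>t. F u t * (\<Prod>j\<in>u. kern \<alpha> (y j) (t j)) \<partial>cube_measure u))" for y
  have Fm: "F u \<in> borel_measurable (cube_measure u)" if "u \<in> ?U" for u
    unfolding F_def[abs_def] using gm[OF that] by measurable
  have Fle: "Lp_norm (cube_measure u) p (F u) \<le> ennreal \<bar>H u * w u\<bar>" if u: "u \<in> ?U" for u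
  proof -
    have "Lp_norm (cube_measure u) p (F u) \<le> ennreal \<bar>H u * w u\<bar> * Lp_norm (cube_measure u) p (g u)"
      unfolding F_def[abs_def] by (rule Lp_cmult_le[OF p_form gm[OF u]])
    also have "\<dots> \<le> ennreal \<bar>H u * w u\<bar> * 1" by (intro mult_left_mono g1[OF u]) auto
    finally show ?thesis by simp
  qed
  have Ffin: "Lp_norm (cube_measure u) p (F u) < \<infinity>" if u: "u \<in> ?U" for u
    using Fle[OF u] by (simp add: le_less_trans)
  have R: "represents \<alpha> s p F f"
    unfolding represents_def memLp_def using Fm Ffin by (auto simp: f_def G_def)
  then have fH: "f \<in> H_space \<alpha> s p" unfolding H_space_def by auto
  have "H_norm \<alpha> s p q f \<le> rep_norm \<alpha> s p q F"
    unfolding H_norm_def using R by (intro Inf_lower) auto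
  also have "\<dots> = Lp_norm (count_space ?U) q (\<lambda>u. G u * enn2real (Lp_norm (cube_measure u) p (F u)))"
    unfolding G_def using Ffin by (intro rep_norm_eq[OF q]) auto
  also have "\<dots> \<le> Lp_norm (count_space ?U) q w"
  proof (rule Lp_mono[OF _ _ cpair_forms(1)[OF cq]])
    fix u assume "u \<in> space (count_space ?U)"
    then have u: "u \<in> ?U" by simp
    have "enn2real (Lp_norm (cube_measure u) p (F u)) \<le> enn2real (ennreal \<bar>H u * w u\<bar>)"
      by (rule enn2real_mono[OF Fle[OF u]]) simp
    then have "G u * enn2real (Lp_norm (cube_measure u) p (F u)) \<le> G u * \<bar>H u * w u\<bar>"
      using G0[of u] by (intro mult_left_mono) auto
    also have "\<dots> = \<bar>w u\<bar>" using GH[of u] G0[of u] by (simp add: abs_mult mult.assoc[symmetric])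
    finally show "\<bar>G u * enn2real (Lp_norm (cube_measure u) p (F u))\<bar> \<le> \<bar>w u\<bar>"
      using G0[of u] by simp
  qed simp
  also have "\<dots> \<le> 1" by (rule w1)
  finally have fn: "H_norm \<alpha> s p q f \<le> 1" .
  have "(\<integral>y. f y \<partial>cube_measure {1..s}) - QMC N x f
      = (\<Sum>u\<in>?U. G u * (\<integral>t. F u t * frac_disc_local \<alpha> N x u t \<partial>cube_measure u))"
    unfolding G_def by (rule err_formula[OF R])
  also have "\<dots> = (\<Sum>u\<in>?U. w u * aa u)"
  proof (intro sum.cong refl)
    fix u assume u: "u \<in> ?U"
    have "(\<integral>t. F u t * frac_disc_local \<alpha> N x u t \<partial>cube_measure u)
        = (\<integral>t. (H u * w u) * (g u t * frac_disc_local \<alpha> N x u t) \<partial>cube_measure u)"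
      unfolding F_def by (simp add: mult.assoc)
    also have "\<dots> = (H u * w u) * aa u" using gi[OF u] by simp
    finally show "G u * (\<integral>t. F u t * frac_disc_local \<alpha> N x u t \<partial>cube_measure u) = w u * aa u"
      using GH[of u] by (simp add: mult.assoc[symmetric])
  qed
  also have "\<dots> = enn2real D" by (rule w2)
  finally have ee: "ennreal \<bar>(\<integral>y. f y \<partial>cube_measure {1..s}) - QMC N x f\<bar> = D"
    using D_fin[OF q] unfolding D_def by (simp add: less_top)
  show ?thesis unfolding e_wor_def D_def[symmetric]
    by (rule Sup_upper) (use ee fH fn in blast)
qed

end

theorem theorem6:
  fixes s N :: nat and \<alpha> :: real and p q :: ereal and x :: "nat \<Rightarrow> nat \<Rightarrow> real"
  assumes "1 \<le> s" and "0 < \<alpha>" and "\<alpha> \<le> 1"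
    and "ereal (1 / \<alpha>) < p"
    and "1 \<le> q"
    and "1 \<le> N"
    and "\<forall>n<N. x n \<in> cube s"
  shows "e_wor \<alpha> s p q N x = frac_disc \<alpha> s (conj_exp p) (conj_exp q) N x"
proof -
  interpret setting \<alpha> p s N x by unfold_locales (use assms in auto)
  have "e_wor \<alpha> s p q N x = Lp_norm (count_space (Pow {1..s})) (conj_exp q) aa"
    by (rule antisym[OF e_wor_le[OF assms(5)] e_wor_ge[OF assms(5)]])
  also have "\<dots> = frac_disc \<alpha> s (conj_exp p) (conj_exp q) N x"
    by (rule frac_disc_eq[OF assms(1,5), symmetric])
  finally show ?thesis .
qed

end
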